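(* Let $\psi:(0,\infty)\to(0,\infty)$ be a non-decreasing function such that $\sum_{k=1}^{\infty}\frac{1}{\psi(k)}=\infty$. There is an absolute constant $C>0$ such that for Lebesgue-almost every $\alpha$ there exist infinitely many $K\in\mathbb{N}$ satisfying both (a) $\psi(K)<a_K<K^2$, and (b) $\sum_{\ell=1}^{K-1}a_\ell\le C\,K\log K$.
   Context: Every irrational $\alpha$ has a unique continued fraction expansion $\alpha=[a_0;a_1,a_2,\dots]$ with partial quotients $a_\ell=a_\ell(\alpha)$ (positive integers for $\ell\ge1$). *)

theory Defs
  imports "HOL-Analysis.Analysis"
begin

definition gauss_map :: "real \<Rightarrow> real" where
  "gauss_map x = frac (1 / x)"

text \<open>For irrational alpha all x_n lie in (0,1) and this is the usual expansion.\<close>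
definition cf_quot :: "real \<Rightarrow> nat \<Rightarrow> int" where
  "cf_quot \<alpha> l = (if l = 0 then \<lfloor>\<alpha>\<rfloor>
                    else \<lfloor>1 / ((gauss_map ^^ (l - 1)) (frac \<alpha>))\<rfloor>)"

end

theory Submission
  imports Defs
begin


fun mob :: "nat list \<Rightarrow> real \<Rightarrow> real" where
  "mob [] y = y"
| "mob (a#u) y = 1 / (real a + mob u y)"

fun cq :: "nat list \<Rightarrow> nat \<times> nat \<times> nat \<times> nat" where
  "cq [] = (0,1,1,0)"
| "cq (a#u) = (case cq u of (P,P',Q,Q') \<Rightarrow> (Q, Q', a*Q+P, a*Q'+P'))"

definition cmul :: "nat\<times>nat\<times>nat\<times>nat \<Rightarrow> nat\<times>nat\<times>nat\<times>nat \<Rightarrow> nat\<times>nat\<times>nat\<times>nat" where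
 "cmul A B = (case A of (P,P',Q,Q') \<Rightarrow> case B of (R,R',S,S') \<Rightarrow>
     (P'*R + P*S, P'*R' + P*S', Q'*R + Q*S, Q'*R' + Q*S'))"

definition pos :: "nat list \<Rightarrow> bool" where "pos u = (\<forall>a\<in>set u. 0 < a)"

lemma mob_append: "mob (u@v) y = mob u (mob v y)"
  by (induction u) auto

lemma cq_append: "cq (u@v) = cmul (cq u) (cq v)"
proof (induction u)
  case Nil
  then show ?case by (cases "cq v") (auto simp: cmul_def)
next
  case (Cons a u)
  obtain P P' Q Q' where u: "cq u = (P,P',Q,Q')" by (cases "cq u") 
  obtain R R' S S' where v: "cq v = (R,R',S,S')" by (cases "cq v")
  show ?case using Cons u v by (simp add: cmul_def algebra_simps)
qed

definition inv4 :: "nat\<times>nat\<times>nat\<times>nat \<Rightarrow> bool" where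
  "inv4 A = (case A of (P,P',Q,Q') \<Rightarrow> 1 \<le> Q \<and> Q' \<le> Q \<and> P \<le> Q \<and> P' \<le> Q \<and> (P' \<le> Q' \<or> P = 0))"

lemma cq_inv: "pos u \<Longrightarrow> inv4 (cq u)"
proof (induction u rule: rev_induct)
  case Nil
  then show ?case by (simp add: inv4_def)
next
  case (snoc a u)
  have a: "1 \<le> a" using snoc.prems by (auto simp: pos_def)
  have pu: "pos u" using snoc.prems by (auto simp: pos_def)
  obtain P P' Q Q' where u: "cq u = (P,P',Q,Q')" by (cases "cq u") 
  have I: "inv4 (P,P',Q,Q')" using snoc.IH pu u by simp
  have e: "cq (u@[a]) = (P' + P*a, P, Q' + Q*a, Q)"
    by (simp add: cq_append u cmul_def)
  have q1: "Q \<le> Q*a" using a by (metis mult.right_neutral mult_le_mono2)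
  have pq: "P * a \<le> Q * a" using I by (simp add: inv4_def)
  have I': "1 \<le> Q" "Q' \<le> Q" "P \<le> Q" "P' \<le> Q" "P' \<le> Q' \<or> P = 0" using I by (auto simp: inv4_def)
  have k: "P' + P*a \<le> Q' + Q*a" using I'(5)
  proof
    assume "P' \<le> Q'" then show ?thesis using pq by linarith
  next
    assume "P = 0" then show ?thesis using I'(4) q1 by (simp; linarith)
  qed
  show ?case unfolding e inv4_def prod.case
    apply (intro conjI) using I' q1 k by linarith+
qed

lemma cq_det: "int (fst (cq u)) * int (snd (snd (snd (cq u)))) - int (fst (snd (cq u))) * int (fst (snd (snd (cq u)))) = (if even (length u) then -1 else 1)"
proof (induction u)
  case Nil
  then show ?case by simp
next
  case (Cons a u)
  obtain P P' Q Q' where u: "cq u = (P,P',Q,Q')" by (cases "cq u") 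
  show ?case using Cons u by (simp add: algebra_simps)
qed

lemma mob_formula:
  assumes "pos u" "0 \<le> y" "cq u = (P,P',Q,Q')"
  shows "mob u y = (real P + real P' * y) / (real Q + real Q' * y)"
  using assms
proof (induction u arbitrary: P P' Q Q')
  case Nil
  then show ?case by auto
next
  case (Cons a u)
  obtain R R' S S' where u: "cq u = (R,R',S,S')" by (cases "cq u")
  have pu: "pos u" and a: "1 \<le> a" using Cons.prems by (auto simp: pos_def)
  have I: "inv4 (R,R',S,S')" using cq_inv[OF pu] u by simp
  have S1: "1 \<le> S" using I by (simp add: inv4_def)
  have S: "real S + real S' * y > 0"
    by (rule add_pos_nonneg) (use S1 Cons.prems(2) in auto)
  have eq: "P = S" "P' = S'" "Q = a*S+R" "Q' = a*S'+R'" using Cons.prems(3) u by auto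
  have "mob (a#u) y = 1 / (real a + (real R + real R' * y) / (real S + real S' * y))"
    using Cons.IH[OF pu Cons.prems(2) u] by simp
  also have "\<dots> = (real S + real S' * y) / (real a * (real S + real S' * y) + (real R + real R' * y))"
  proof -
    have "real a + (real R + real R' * y) / (real S + real S' * y) = (real a * (real S + real S' * y) + (real R + real R' * y)) / (real S + real S' * y)"
      using S by (simp add: add_divide_eq_iff)
    then show ?thesis by simp
  qed
  also have "\<dots> = (real P + real P' * y) / (real Q + real Q' * y)"
    by (simp add: eq algebra_simps)
  finally show ?case .
qed


definition nu :: "nat list \<Rightarrow> real" where
  "nu u = (case cq u of (P,P',Q,Q') \<Rightarrow> 1 / (real Q * (real Q + real Q')))"

definition Icyl :: "nat list \<Rightarrow> real set" where
  "Icyl u = mob u ` {0<..<1}"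

lemma g_image:
  fixes Q Q' :: real
  assumes "Q > 0" "Q' \<ge> 0"
  shows "(\<lambda>y. y / (Q * (Q + Q' * y))) ` {0<..<1} = {0<..<1 / (Q * (Q + Q'))}"
proof (intro equalityI subsetI)
  fix t assume "t \<in> (\<lambda>y. y / (Q * (Q + Q' * y))) ` {0<..<1}"
  then obtain y where y: "0 < y" "y < 1" and t: "t = y / (Q * (Q + Q' * y))" by auto
  have d: "Q + Q' * y > 0" using assms y by (simp add: add_pos_nonneg)
  have "t > 0" using t y d assms by simp
  moreover have "y * (Q * (Q + Q')) < 1 * (Q * (Q + Q' * y))"
    using y assms by (simp add: algebra_simps)
  then have "t < 1 / (Q * (Q + Q'))" unfolding t using d assms
    by (simp add: divide_simps add_pos_nonneg mult_pos_pos)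
  ultimately show "t \<in> {0<..<1 / (Q * (Q + Q'))}" by simp
next
  fix t assume "t \<in> {0<..<1 / (Q * (Q + Q'))}"
  then have t0: "0 < t" and t1: "t < 1 / (Q * (Q + Q'))" by auto
  have QQ: "Q * (Q + Q') > 0" using assms by (simp add: add_pos_nonneg)
  have t2: "t * (Q * (Q + Q')) < 1" using t1 QQ by (simp add: field_simps)
  have e0: "0 \<le> t * Q * Q" using t0 assms by simp
  have e1: "t * (Q * (Q + Q')) = t * Q * Q + t * Q * Q'" by (simp add: algebra_simps)
  have e: "1 - t * Q * Q' > 0" using t2 e0 e1 by linarith
  define y where "y = t * Q^2 / (1 - t * Q * Q')"
  have y0: "y > 0" unfolding y_def using e t0 assms by simp
  have y1: "y < 1" unfolding y_def using e t2 by (simp add: field_simps power2_eq_square)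
  have "Q + Q' * y = Q / (1 - t * Q * Q')"
    unfolding y_def using e by (simp add: field_simps power2_eq_square)
  then have "y / (Q * (Q + Q' * y)) = t"
    unfolding y_def using e assms by (simp add: field_simps power2_eq_square)
  then show "t \<in> (\<lambda>y. y / (Q * (Q + Q' * y))) ` {0<..<1}"
    using y0 y1 by (metis (no_types, lifting) greaterThanLessThan_iff image_eqI)
qed

lemma Icyl_interval:
  assumes "pos u" "cq u = (P,P',Q,Q')"
  shows "Icyl u = (if even (length u) then {real P / real Q <..< real P / real Q + nu u}
                   else {real P / real Q - nu u <..< real P / real Q})"
proof -
  have I: "inv4 (P,P',Q,Q')" using cq_inv[OF assms(1)] assms(2) by simp
  have Q: "real Q > 0" using I by (simp add: inv4_def)
  define d :: real where "d = (if even (length u) then -1 else 1)"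
  have c: "int P * int Q' - int P' * int Q = (if even (length u) then -1 else 1)"
    using cq_det[of u] assms(2) by simp
  have "real_of_int (int P * int Q' - int P' * int Q) = d" unfolding d_def c by simp
  then have det: "real P * real Q' - real P' * real Q = d" by simp
  have h: "mob u y = real P / real Q - d * (y / (real Q * (real Q + real Q' * y)))" if "y \<ge> 0" for y
  proof -
    have D: "real Q + real Q' * y > 0" using Q that by (simp add: add_pos_nonneg)
    have "mob u y = (real P + real P' * y) / (real Q + real Q' * y)"
      using mob_formula[OF assms(1) that assms(2)] .
    also have "\<dots> = real Q * (real P + real P' * y) / (real Q * (real Q + real Q' * y))"
      using Q by simp
    also have "real Q * (real P + real P' * y) = real P * (real Q + real Q' * y) - d * y"
      unfolding det[symmetric] by (simp add: algebra_simps)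
    also have "(real P * (real Q + real Q' * y) - d * y) / (real Q * (real Q + real Q' * y)) = real P / real Q - d * (y / (real Q * (real Q + real Q' * y)))"
    proof -
      have "(real P * (real Q + real Q' * y) - d * y) / (real Q * (real Q + real Q' * y))
          = real P * (real Q + real Q' * y) / (real Q * (real Q + real Q' * y)) - d * y / (real Q * (real Q + real Q' * y))"
        by (simp add: diff_divide_distrib)
      also have "real P * (real Q + real Q' * y) / (real Q * (real Q + real Q' * y)) = real P / real Q"
        using D by simp
      finally show ?thesis by simp
    qed
    finally show ?thesis .
  qed
  have nu: "nu u = 1 / (real Q * (real Q + real Q'))" using assms(2) by (simp add: nu_def)
  have "Icyl u = (\<lambda>t. real P / real Q - d * t) ` ((\<lambda>y. y / (real Q * (real Q + real Q' * y))) ` {0<..<1})"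
    unfolding Icyl_def image_image using h by (intro image_cong) auto
  also have "\<dots> = (\<lambda>t. real P / real Q - d * t) ` {0<..<nu u}"
    using g_image[OF Q, of "real Q'"] nu by simp
  also have "\<dots> = (if even (length u) then {real P / real Q <..< real P / real Q + nu u}
                   else {real P / real Q - nu u <..< real P / real Q})"
  proof (cases "even (length u)")
    case True
    then have "d = -1" by (simp add: d_def)
    then show ?thesis using True
      by (auto simp: image_iff intro!: bexI[where x="_ - real P / real Q"])
  next
    case False
    then have "d = 1" by (simp add: d_def)
    then show ?thesis using False
      by (auto simp: image_iff intro!: bexI[where x="real P / real Q - _"])
  qed
  finally show ?thesis .
qed

lemma nu_pos: "pos u \<Longrightarrow> nu u > 0"
  using cq_inv[of u] by (cases "cq u") (auto simp: nu_def inv4_def add_pos_nonneg)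

lemma emeasure_Icyl: "pos u \<Longrightarrow> emeasure lborel (Icyl u) = ennreal (nu u)"
  using Icyl_interval[of u] nu_pos[of u] by (cases "cq u") auto

lemma Icyl_sets[measurable]: "pos u \<Longrightarrow> Icyl u \<in> sets lborel"
  using Icyl_interval[of u] by (cases "cq u") auto



abbreviation T :: "real \<Rightarrow> real" where "T \<equiv> gauss_map"

definition dig :: "nat \<Rightarrow> real \<Rightarrow> nat list" where
  "dig n x = map (\<lambda>l. nat (cf_quot x l)) [1..<Suc n]"

definition Om :: "real set" where "Om = {0<..<1} - \<rat>"

lemma length_dig[simp]: "length (dig n x) = n"
  by (simp add: dig_def)

lemma mob_props:
  assumes "pos u" "y \<in> {0<..<1}"
  shows "mob u y \<in> {0<..<1} \<and> (T ^^ length u) (mob u y) = y \<and>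
         (\<forall>l<length u. \<lfloor>1 / (T ^^ l) (mob u y)\<rfloor> = int (u!l))"
  using assms
proof (induction u)
  case Nil
  then show ?case by simp
next
  case (Cons a u)
  have pu: "pos u" and a: "1 \<le> a" using Cons.prems by (auto simp: pos_def)
  define z where "z = mob u y"
  have IH: "z \<in> {0<..<1}" "(T ^^ length u) z = y" "\<forall>l<length u. \<lfloor>1 / (T ^^ l) z\<rfloor> = int (u!l)"
    using Cons.IH[OF pu Cons.prems(2)] unfolding z_def by auto
  have x: "mob (a#u) y = 1 / (real a + z)" by (simp add: z_def)
  have az: "real a + z > 1" using a IH(1) by simp
  have inv: "1 / (1 / (real a + z)) = real a + z" by simp
  have fl: "\<lfloor>real a + z\<rfloor> = int a" using IH(1) by (simp add: floor_eq_iff)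
  have Tx: "T (1 / (real a + z)) = z"
    unfolding gauss_map_def inv using IH(1) fl by (simp add: frac_def)
  have pw: "(T ^^ Suc n) (1 / (real a + z)) = (T ^^ n) z" for n
    by (simp add: funpow_Suc_right Tx del: funpow.simps)
  show ?case
  proof (intro conjI allI impI)
    show "mob (a#u) y \<in> {0<..<1}" using x az by simp
    show "(T ^^ length (a#u)) (mob (a#u) y) = y" using x pw IH by simp
    fix l assume l: "l < length (a#u)"
    show "\<lfloor>1 / (T ^^ l) (mob (a#u) y)\<rfloor> = int ((a#u)!l)"
    proof (cases l)
      case 0
      then show ?thesis using x fl by simp
    next
      case (Suc l')
      then show ?thesis using x pw IH(3) l by simp
    qed
  qed
qed

lemma cf_quot_Suc: "x \<in> {0<..<1} \<Longrightarrow> cf_quot x (Suc l) = \<lfloor>1 / (T ^^ l) x\<rfloor>"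
  by (simp add: cf_quot_def frac_eq)

lemma dig_mob:
  assumes "pos u" "y \<in> {0<..<1}"
  shows "dig (length u) (mob u y) = u"
proof -
  note P = mob_props[OF assms]
  show ?thesis
  proof (rule nth_equalityI)
    fix l assume "l < length (dig (length u) (mob u y))"
    then have l: "l < length u" by simp
    have "dig (length u) (mob u y) ! l = nat (cf_quot (mob u y) (Suc l))"
      using l by (simp add: dig_def nth_upt del: upt_Suc)
    also have "\<dots> = u ! l" using cf_quot_Suc[of "mob u y" l] P l by simp
    finally show "dig (length u) (mob u y) ! l = u ! l" .
  qed simp
qed

lemma gauss_Om: "x \<in> Om \<Longrightarrow> T x \<in> Om"
proof -
  assume x: "x \<in> Om"
  then have x0: "0 < x" "x < 1" "x \<notin> \<rat>" by (auto simp: Om_def)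
  have r: "1 / x \<notin> \<rat>"
  proof
    assume "1 / x \<in> \<rat>"
    then have "1 / (1 / x) \<in> \<rat>" by (rule Rats_divide[OF Rats_1])
    then show False using x0 by simp
  qed
  have f: "frac (1/x) = 1/x - of_int \<lfloor>1/x\<rfloor>" by (simp add: frac_def)
  have "frac (1/x) \<notin> \<rat>"
  proof
    assume "frac (1/x) \<in> \<rat>"
    then have "frac (1/x) + of_int \<lfloor>1/x\<rfloor> \<in> \<rat>" by (simp add: Rats_add)
    moreover have "frac (1/x) + of_int \<lfloor>1/x\<rfloor> = 1/x" by (simp add: frac_def)
    ultimately show False using r by simp
  qed
  moreover have "frac (1/x) \<noteq> 0" using calculation Rats_0 by metis
  then have "frac (1/x) > 0" using frac_ge_0[of "1/x"] by linarith
  ultimately show ?thesis by (simp add: Om_def gauss_map_def frac_lt_1)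
qed

lemma Om_funpow: "x \<in> Om \<Longrightarrow> (T ^^ n) x \<in> Om"
  by (induction n) (auto simp: gauss_Om)

lemma Om_decomp:
  assumes "x \<in> Om"
  shows "pos (dig n x) \<and> x = mob (dig n x) ((T ^^ n) x)"
proof (induction n)
  case 0
  then show ?case by (simp add: dig_def pos_def)
next
  case (Suc n)
  define y where "y = (T ^^ n) x"
  have y: "y \<in> Om" unfolding y_def by (rule Om_funpow[OF assms])
  then have y0: "0 < y" "y < 1" by (auto simp: Om_def)
  have "1 < 1 / y" using y0 by simp
  then have a1: "1 \<le> \<lfloor>1/y\<rfloor>" by linarith
  define a where "a = nat \<lfloor>1/y\<rfloor>"
  have a0: "0 \<le> \<lfloor>1/y\<rfloor>" using a1 by linarith
  have a: "real a = of_int \<lfloor>1/y\<rfloor>" "0 < a" using of_nat_nat[OF a0] a1 by (auto simp: a_def)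
  have ya: "y = 1 / (real a + T y)"
    using y0 a by (simp add: gauss_map_def frac_def)
  have x0: "x \<in> {0<..<1}" using assms by (auto simp: Om_def)
  have cf: "nat (cf_quot x (Suc n)) = a"
    using cf_quot_Suc[OF x0, of n] by (simp add: a_def y_def)
  have dS: "dig (Suc n) x = dig n x @ [a]"
    using cf by (simp add: dig_def)
  have "x = mob (dig n x) y" using Suc by (simp add: y_def)
  also have "\<dots> = mob (dig n x) (mob [a] (T y))" using ya by simp
  also have "\<dots> = mob (dig (Suc n) x) ((T ^^ Suc n) x)"
    by (simp add: dS mob_append y_def)
  finally show ?case using Suc a(2) dS by (auto simp: pos_def)
qed

lemma Om_subset: "Om \<subseteq> {0<..<1}" by (auto simp: Om_def)

lemma dig_take: "m \<le> N \<Longrightarrow> dig m x = take m (dig N x)"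
  by (simp add: dig_def take_map take_upt del: upt_Suc)

lemma pos_append[simp]: "pos (u @ v) = (pos u \<and> pos v)"
  by (auto simp: pos_def)

lemma mob_rat: "pos u \<Longrightarrow> 0 \<le> y \<Longrightarrow> mob u y \<in> \<rat> \<longleftrightarrow> y \<in> \<rat>"
proof (induction u)
  case Nil
  then show ?case by simp
next
  case (Cons a u)
  have pu: "pos u" and a: "0 < a" using Cons.prems by (auto simp: pos_def)
  have z: "mob u y \<ge> 0" using mob_formula[OF pu Cons.prems(2), of "fst (cq u)"] cq_inv[OF pu]
    by (cases "cq u") (auto simp: mob_formula[OF pu Cons.prems(2)] Cons.prems(2))
  have ne: "real a + mob u y \<noteq> 0" using a z by simp
  have "mob (a#u) y \<in> \<rat> \<longleftrightarrow> mob u y \<in> \<rat>"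
  proof
    assume "mob (a#u) y \<in> \<rat>"
    then have "1 / mob (a#u) y - real a \<in> \<rat>" by (intro Rats_diff Rats_divide) auto
    moreover have "1 / mob (a#u) y - real a = mob u y" using ne by simp
    ultimately show "mob u y \<in> \<rat>" by simp
  next
    assume "mob u y \<in> \<rat>" then show "mob (a#u) y \<in> \<rat>" by simp
  qed
  then show ?case using Cons.IH[OF pu Cons.prems(2)] by simp
qed

lemma mob_Om: "pos u \<Longrightarrow> y \<in> Om \<Longrightarrow> mob u y \<in> Om"
  using mob_props[of u y] mob_rat[of u y] by (auto simp: Om_def)

lemma dig_add:
  assumes "x \<in> Om"
  shows "dig (m+k) x = dig m x @ dig k ((T ^^ m) x)"
proof -
  define y where "y = (T ^^ m) x"
  have y: "y \<in> Om" unfolding y_def using Om_funpow assms by blast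
  define z where "z = (T ^^ k) y"
  have z: "z \<in> Om" unfolding z_def using Om_funpow y by blast
  have d1: "pos (dig m x)" "x = mob (dig m x) y" using Om_decomp[OF assms, of m] by (auto simp: y_def)
  have d2: "pos (dig k y)" "y = mob (dig k y) z" using Om_decomp[OF y, of k] by (auto simp: z_def)
  have "x = mob (dig m x @ dig k y) z" using d1 d2 by (simp add: mob_append)
  then have "dig (length (dig m x @ dig k y)) x = dig m x @ dig k y"
    using dig_mob[of "dig m x @ dig k y" z] d1 d2 z Om_subset by auto
  then show ?thesis by (simp add: y_def)
qed



lemma nu_mult:
  assumes "pos u" "pos v"
  shows "nu (u@v) \<le> 4 * nu u * nu v" "nu u * nu v \<le> 8 * nu (u@v)"
proof -
  obtain P P' Q Q' where u: "cq u = (P,P',Q,Q')" by (cases "cq u")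
  obtain R R' S S' where v: "cq v = (R,R',S,S')" by (cases "cq v")
  have Iu: "inv4 (P,P',Q,Q')" using cq_inv[OF assms(1)] u by simp
  have Iv: "inv4 (R,R',S,S')" using cq_inv[OF assms(2)] v by simp
  have uv: "cq (u@v) = (P'*R + P*S, P'*R' + P*S', Q'*R + Q*S, Q'*R' + Q*S')"
    by (simp add: cq_append u v cmul_def)
  define A :: real where "A = real (Q'*R + Q*S)"
  define B :: real where "B = real (Q'*R' + Q*S')"
  define q :: real where "q = real Q"
  define q' :: real where "q' = real Q'"
  define s :: real where "s = real S"
  define s' :: real where "s' = real S'"
  have q: "1 \<le> q" "0 \<le> q'" "q' \<le> q" using Iu by (auto simp: inv4_def q_def q'_def)
  have s: "1 \<le> s" "0 \<le> s'" "s' \<le> s" using Iv by (auto simp: inv4_def s_def s'_def)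
  have RS: "real R \<le> s" "real R' \<le> s" using Iv by (auto simp: inv4_def s_def)
  have A: "q * s \<le> A" "A \<le> 2 * (q * s)"
  proof -
    have "real Q' * real R \<le> q * s" using q RS by (simp add: q'_def mult_mono)
    then show "q * s \<le> A" "A \<le> 2 * (q * s)" by (auto simp: A_def q_def s_def)
  qed
  have B: "0 \<le> B" "B \<le> 2 * (q * s)"
  proof -
    have "real Q' * real R' \<le> q * s" using q RS by (simp add: q'_def mult_mono)
    moreover have "real Q * real S' \<le> q * s"
    proof -
      have "real S' \<le> real S" using s by (simp add: s_def s'_def)
      then show ?thesis unfolding q_def s_def by (rule mult_left_mono) simp
    qed
    ultimately show "0 \<le> B" "B \<le> 2 * (q * s)" by (auto simp: B_def)
  qed
  have qs: "q * s \<ge> 1" using q s by (metis mult_mono mult_1 order_trans zero_le_one)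
  have nuuv: "nu (u@v) = 1 / (A * (A + B))" by (simp add: nu_def uv A_def B_def)
  have nuu: "nu u = 1 / (q * (q + q'))" by (simp add: nu_def u q_def q'_def)
  have nuv: "nu v = 1 / (s * (s + s'))" by (simp add: nu_def v s_def s'_def)
  have X: "q * (q + q') * (s * (s + s')) \<le> 4 * (q * s) * (q * s)"
  proof -
    have "q * (q + q') \<le> q * (2 * q)" using q by (intro mult_left_mono) auto
    moreover have "s * (s + s') \<le> s * (2 * s)" using s by (intro mult_left_mono) auto
    ultimately have "q * (q + q') * (s * (s + s')) \<le> (q * (2 * q)) * (s * (2 * s))"
      using q s by (intro mult_mono) auto
    then show ?thesis by (simp add: algebra_simps)
  qed
  have Y: "(q * s) * (q * s) \<le> A * (A + B)"
    using A B qs by (intro mult_mono) auto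
  have Z: "A * (A + B) \<le> 8 * ((q * s) * (q * s))"
  proof -
    have "A * (A + B) \<le> (2 * (q * s)) * (4 * (q * s))"
      using A B qs by (intro mult_mono) auto
    then show ?thesis by (simp add: algebra_simps)
  qed
  have W: "(q * s) * (q * s) \<le> q * (q + q') * (s * (s + s'))"
  proof -
    have "q * q \<le> q * (q + q')" using q by (intro mult_left_mono) auto
    moreover have "s * s \<le> s * (s + s')" using s by (intro mult_left_mono) auto
    ultimately have "(q * q) * (s * s) \<le> q * (q + q') * (s * (s + s'))"
      using q s by (intro mult_mono) auto
    then show ?thesis by (simp add: algebra_simps)
  qed
  have pos1: "q * (q + q') * (s * (s + s')) > 0" using q s by (simp add: add_pos_nonneg)
  have pos2: "A * (A + B) > 0" using A B qs by (simp add: add_pos_nonneg)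
  have pos3: "(q * s) * (q * s) > 0" using qs by simp
  show "nu (u@v) \<le> 4 * nu u * nu v"
    unfolding nuuv nuu nuv using X Y pos1 pos2 pos3 by (simp add: divide_simps)
  show "nu u * nu v \<le> 8 * nu (u@v)"
    unfolding nuuv nuu nuv using Z W pos1 pos2 pos3 by (simp add: divide_simps)
qed

definition words :: "nat \<Rightarrow> nat list set" where "words n = {u. length u = n \<and> pos u}"

definition cyl :: "nat \<Rightarrow> (nat list \<Rightarrow> bool) \<Rightarrow> real set" where
  "cyl n P = {x \<in> Om. P (dig n x)}"

lemma Om_sets[measurable]: "Om \<in> sets lborel"
proof -
  have "\<rat> \<in> sets lborel" using countable_imp_null_set_lborel[OF countable_rat] by auto
  then show ?thesis unfolding Om_def by auto
qed

lemma Icyl_sub: "pos u \<Longrightarrow> Icyl u \<subseteq> {0<..<1}"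
  using mob_props by (auto simp: Icyl_def)

lemma Icyl_dig: "pos u \<Longrightarrow> x \<in> Icyl u \<Longrightarrow> dig (length u) x = u"
  using dig_mob by (auto simp: Icyl_def)

lemma cyl_UN: "cyl n P = (\<Union>u\<in>{u\<in>words n. P u}. Icyl u \<inter> Om)"
proof (intro equalityI subsetI)
  fix x assume x: "x \<in> cyl n P"
  then have xO: "x \<in> Om" and P: "P (dig n x)" by (auto simp: cyl_def)
  have d: "pos (dig n x)" "x = mob (dig n x) ((T ^^ n) x)" using Om_decomp[OF xO] by auto
  have "(T ^^ n) x \<in> {0<..<1}" using Om_funpow[OF xO] Om_subset by blast
  then have "x \<in> Icyl (dig n x)" using d unfolding Icyl_def by (metis image_eqI)
  then show "x \<in> (\<Union>u\<in>{u\<in>words n. P u}. Icyl u \<inter> Om)"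
    using xO P d by (intro UN_I[of "dig n x"]) (auto simp: words_def)
next
  fix x assume "x \<in> (\<Union>u\<in>{u\<in>words n. P u}. Icyl u \<inter> Om)"
  then obtain u where u: "u \<in> words n" "P u" "x \<in> Icyl u" "x \<in> Om" by auto
  then have "dig n x = u" using Icyl_dig[of u x] by (auto simp: words_def)
  then show "x \<in> cyl n P" using u by (auto simp: cyl_def)
qed

lemma cyl_sets[measurable]: "cyl n P \<in> sets lborel"
  unfolding cyl_UN by (intro sets.countable_UN') (auto simp: words_def)

lemma cyl_sets_borel[measurable, simp]: "cyl n P \<in> sets borel"
  using cyl_sets by simp

lemma emeasure_Icyl_Om: "pos u \<Longrightarrow> emeasure lborel (Icyl u \<inter> Om) = ennreal (nu u)"
proof -
  assume u: "pos u"
  have "Icyl u \<inter> Om = Icyl u - \<rat>" using Icyl_sub[OF u] by (auto simp: Om_def)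
  then show ?thesis
    using emeasure_Diff_null_set[OF countable_imp_null_set_lborel[OF countable_rat] Icyl_sets[OF u]]
      emeasure_Icyl[OF u] by simp
qed

lemma emeasure_cyl:
  "emeasure lborel (cyl n P) = (\<integral>\<^sup>+u. ennreal (nu u) \<partial>count_space {u\<in>words n. P u})"
proof -
  have "emeasure lborel (cyl n P) = (\<integral>\<^sup>+u. emeasure lborel (Icyl u \<inter> Om) \<partial>count_space {u\<in>words n. P u})"
    unfolding cyl_UN
  proof (rule emeasure_UN_countable)
    show "disjoint_family_on (\<lambda>u. Icyl u \<inter> Om) {u \<in> words n. P u}"
      unfolding disjoint_family_on_def
    proof (intro ballI impI)
      fix u v assume u: "u \<in> {u \<in> words n. P u}" and v: "v \<in> {u \<in> words n. P u}" and uv: "u \<noteq> v"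
      show "Icyl u \<inter> Om \<inter> (Icyl v \<inter> Om) = {}"
      proof (rule ccontr)
        assume "Icyl u \<inter> Om \<inter> (Icyl v \<inter> Om) \<noteq> {}"
        then obtain x where x: "x \<in> Icyl u" "x \<in> Icyl v" by blast
        have "dig n x = u" using Icyl_dig[of u x] u x by (auto simp: words_def)
        moreover have "dig n x = v" using Icyl_dig[of v x] v x by (auto simp: words_def)
        ultimately show False using uv by simp
      qed
    qed
  qed (auto simp: words_def)
  also have "\<dots> = (\<integral>\<^sup>+u. ennreal (nu u) \<partial>count_space {u\<in>words n. P u})"
    by (intro nn_integral_cong) (auto simp: emeasure_Icyl_Om words_def)
  finally show ?thesis .
qed



lemma words_append: "s \<in> words m \<Longrightarrow> t \<in> words k \<Longrightarrow> s @ t \<in> words (m+k)"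
  by (auto simp: words_def)

lemma emeasure_cyl_fiber:
  assumes s: "s \<in> words m"
  shows "emeasure lborel (cyl (m+k) (\<lambda>w. take m w = s \<and> R (drop m w)))
       = (\<integral>\<^sup>+t. ennreal (nu (s @ t)) \<partial>count_space {t\<in>words k. R t})"
proof -
  have bij: "bij_betw (\<lambda>t. s @ t) {t\<in>words k. R t} {w\<in>words (m+k). take m w = s \<and> R (drop m w)}"
  proof (rule bij_betwI')
    show "\<And>x y. x \<in> {t \<in> words k. R t} \<Longrightarrow> y \<in> {t \<in> words k. R t} \<Longrightarrow> (s @ x = s @ y) = (x = y)" by simp
    show "\<And>x. x \<in> {t \<in> words k. R t} \<Longrightarrow> s @ x \<in> {w \<in> words (m + k). take m w = s \<and> R (drop m w)}"
      using s by (auto simp: words_def)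
    fix w assume w: "w \<in> {w \<in> words (m + k). take m w = s \<and> R (drop m w)}"
    then have "w = s @ drop m w" by (metis (mono_tags, lifting) append_take_drop_id mem_Collect_eq)
    moreover have "drop m w \<in> {t \<in> words k. R t}" using w s
      by (auto simp: words_def pos_def dest: in_set_dropD)
    ultimately show "\<exists>x\<in>{t \<in> words k. R t}. w = s @ x" by blast
  qed
  show ?thesis
    unfolding emeasure_cyl using nn_integral_bij_count_space[OF bij, of "\<lambda>w. ennreal (nu w)"] by simp
qed

lemma cyl_prod_split:
  "cyl (m+k) (\<lambda>w. P (take m w) \<and> R (drop m w))
     = (\<Union>s\<in>{s\<in>words m. P s}. cyl (m+k) (\<lambda>w. take m w = s \<and> R (drop m w)))"
proof (intro equalityI subsetI)
  fix x assume x: "x \<in> cyl (m+k) (\<lambda>w. P (take m w) \<and> R (drop m w))"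
  then have xO: "x \<in> Om" by (auto simp: cyl_def)
  have "take m (dig (m+k) x) = dig m x" using dig_take[of m "m+k" x] by simp
  moreover have "pos (dig m x)" using Om_decomp[OF xO] by auto
  ultimately show "x \<in> (\<Union>s\<in>{s\<in>words m. P s}. cyl (m+k) (\<lambda>w. take m w = s \<and> R (drop m w)))"
    using x by (auto simp: cyl_def words_def)
qed (auto simp: cyl_def)

lemma cyl_prod:
  "emeasure lborel (cyl (m+k) (\<lambda>w. P (take m w) \<and> R (drop m w)))
     \<le> 4 * emeasure lborel (cyl m P) * emeasure lborel (cyl k R)"
  "emeasure lborel (cyl m P) * emeasure lborel (cyl k R)
     \<le> 8 * emeasure lborel (cyl (m+k) (\<lambda>w. P (take m w) \<and> R (drop m w)))"
proof -
  let ?Z = "\<lambda>s. cyl (m+k) (\<lambda>w. take m w = s \<and> R (drop m w))"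
  have E: "emeasure lborel (cyl (m+k) (\<lambda>w. P (take m w) \<and> R (drop m w)))
      = (\<integral>\<^sup>+s. emeasure lborel (?Z s) \<partial>count_space {s\<in>words m. P s})"
    unfolding cyl_prod_split
  proof (rule emeasure_UN_countable)
    show "disjoint_family_on ?Z {s \<in> words m. P s}"
      unfolding disjoint_family_on_def by (auto simp: cyl_def)
  qed auto
  have ER: "emeasure lborel (cyl k R) = (\<integral>\<^sup>+t. ennreal (nu t) \<partial>count_space {t\<in>words k. R t})"
    by (rule emeasure_cyl)
  have EP: "emeasure lborel (cyl m P) = (\<integral>\<^sup>+s. ennreal (nu s) \<partial>count_space {s\<in>words m. P s})"
    by (rule emeasure_cyl)
  have up: "emeasure lborel (?Z s) \<le> 4 * ennreal (nu s) * emeasure lborel (cyl k R)"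
    if s: "s \<in> {s\<in>words m. P s}" for s
  proof -
    have "emeasure lborel (?Z s) = (\<integral>\<^sup>+t. ennreal (nu (s @ t)) \<partial>count_space {t\<in>words k. R t})"
      using emeasure_cyl_fiber s by auto
    also have "\<dots> \<le> (\<integral>\<^sup>+t. (4 * ennreal (nu s)) * ennreal (nu t) \<partial>count_space {t\<in>words k. R t})"
    proof (intro nn_integral_mono)
      fix t assume "t \<in> space (count_space {t\<in>words k. R t})"
      then have t: "pos t" by (auto simp: words_def)
      have "nu (s @ t) \<le> 4 * nu s * nu t" using nu_mult(1)[of s t] s t by (auto simp: words_def)
      moreover have "(4 * ennreal (nu s)) * ennreal (nu t) = ennreal (4 * nu s * nu t)"
        using nu_pos[of s] nu_pos[OF t] s by (simp add: ennreal_mult words_def)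
      ultimately show "ennreal (nu (s @ t)) \<le> (4 * ennreal (nu s)) * ennreal (nu t)"
        by (simp add: ennreal_leI)
    qed
    also have "\<dots> = 4 * ennreal (nu s) * emeasure lborel (cyl k R)"
      unfolding ER by (rule nn_integral_cmult) simp
    finally show ?thesis .
  qed
  have lo: "ennreal (nu s) * emeasure lborel (cyl k R) \<le> 8 * emeasure lborel (?Z s)"
    if s: "s \<in> {s\<in>words m. P s}" for s
  proof -
    have "ennreal (nu s) * emeasure lborel (cyl k R) = (\<integral>\<^sup>+t. ennreal (nu s) * ennreal (nu t) \<partial>count_space {t\<in>words k. R t})"
      unfolding ER by (rule nn_integral_cmult[symmetric]) simp
    also have "\<dots> \<le> (\<integral>\<^sup>+t. 8 * ennreal (nu (s @ t)) \<partial>count_space {t\<in>words k. R t})"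
    proof (intro nn_integral_mono)
      fix t assume "t \<in> space (count_space {t\<in>words k. R t})"
      then have t: "pos t" by (auto simp: words_def)
      have "nu s * nu t \<le> 8 * nu (s @ t)" using nu_mult(2)[of s t] s t by (auto simp: words_def)
      moreover have "ennreal (nu s) * ennreal (nu t) = ennreal (nu s * nu t)"
        using nu_pos[of s] nu_pos[OF t] s by (simp add: ennreal_mult words_def)
      moreover have "8 * ennreal (nu (s @ t)) = ennreal (8 * nu (s @ t))"
        by (simp add: ennreal_mult')
      ultimately show "ennreal (nu s) * ennreal (nu t) \<le> 8 * ennreal (nu (s @ t))"
        by (simp add: ennreal_leI)
    qed
    also have "\<dots> = 8 * emeasure lborel (?Z s)"
      using emeasure_cyl_fiber[of s m k R] s by (simp add: nn_integral_cmult)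
    finally show ?thesis .
  qed
  show "emeasure lborel (cyl (m+k) (\<lambda>w. P (take m w) \<and> R (drop m w)))
     \<le> 4 * emeasure lborel (cyl m P) * emeasure lborel (cyl k R)"
  proof -
    have "emeasure lborel (cyl (m+k) (\<lambda>w. P (take m w) \<and> R (drop m w)))
        \<le> (\<integral>\<^sup>+s. (4 * emeasure lborel (cyl k R)) * ennreal (nu s) \<partial>count_space {s\<in>words m. P s})"
      unfolding E by (intro nn_integral_mono) (use up in \<open>auto simp: mult_ac\<close>)
    also have "\<dots> = 4 * emeasure lborel (cyl k R) * emeasure lborel (cyl m P)"
      unfolding EP by (rule nn_integral_cmult) simp
    finally show ?thesis by (simp add: mult_ac)
  qed
  show "emeasure lborel (cyl m P) * emeasure lborel (cyl k R)
     \<le> 8 * emeasure lborel (cyl (m+k) (\<lambda>w. P (take m w) \<and> R (drop m w)))"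
  proof -
    have "emeasure lborel (cyl m P) * emeasure lborel (cyl k R)
        = (\<integral>\<^sup>+s. ennreal (nu s) * emeasure lborel (cyl k R) \<partial>count_space {s\<in>words m. P s})"
      unfolding EP by (simp add: nn_integral_multc)
    also have "\<dots> \<le> (\<integral>\<^sup>+s. 8 * emeasure lborel (?Z s) \<partial>count_space {s\<in>words m. P s})"
      by (intro nn_integral_mono) (use lo in auto)
    also have "\<dots> = 8 * emeasure lborel (cyl (m+k) (\<lambda>w. P (take m w) \<and> R (drop m w)))"
      unfolding E by (rule nn_integral_cmult) simp
    finally show ?thesis .
  qed
qed



definition mu :: "nat \<Rightarrow> (nat list \<Rightarrow> bool) \<Rightarrow> real" where
  "mu n P = measure lborel (cyl n P)"

lemma emeasure_Om: "emeasure lborel Om = 1"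
proof -
  have "emeasure lborel Om = emeasure lborel ({0<..<1::real} - \<rat>)" by (simp add: Om_def)
  also have "\<dots> = emeasure lborel {0<..<1::real}"
    by (rule emeasure_Diff_null_set[OF countable_imp_null_set_lborel[OF countable_rat]]) auto
  finally show ?thesis by simp
qed

lemma cyl_sub_Om: "cyl n P \<subseteq> Om" by (auto simp: cyl_def)

lemma emeasure_cyl_le1: "emeasure lborel (cyl n P) \<le> 1"
  using emeasure_mono[OF cyl_sub_Om Om_sets] emeasure_Om by simp

lemma emeasure_cyl_mu: "emeasure lborel (cyl n P) = ennreal (mu n P)"
  unfolding mu_def using emeasure_cyl_le1[of n P]
  by (intro emeasure_eq_ennreal_measure) (auto simp: top_unique)

lemma mu_nonneg: "0 \<le> mu n P" by (simp add: mu_def)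

lemma fm_Ioc: "{a<..b::real} \<in> fmeasurable lborel"
  by (rule fmeasurableI2[OF fmeasurable_cbox[of a b, unfolded cbox_interval]]) auto

lemma fm_Ioo: "{a<..<b::real} \<in> fmeasurable lborel"
  by (rule fmeasurableI2[OF fmeasurable_cbox[of a b, unfolded cbox_interval]]) auto

lemma Rats_sets[measurable]: "(\<rat> :: real set) \<in> sets borel"
  using countable_imp_null_set_lborel[OF countable_rat] by (auto simp: null_sets_def)

lemma mu_le1: "mu n P \<le> 1"
  using emeasure_cyl_le1[of n P] by (simp add: emeasure_cyl_mu)

lemma cyl_fmeas: "cyl n P \<in> fmeasurable lborel"
  by (intro fmeasurableI) (auto simp: emeasure_cyl_mu)

lemma mu_prod:
  "mu (m+k) (\<lambda>w. P (take m w) \<and> R (drop m w)) \<le> 4 * mu m P * mu k R"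
  "mu m P * mu k R \<le> 8 * mu (m+k) (\<lambda>w. P (take m w) \<and> R (drop m w))"
proof -
  have A: "ennreal (mu (m+k) (\<lambda>w. P (take m w) \<and> R (drop m w))) \<le> ennreal (4 * mu m P * mu k R)"
    using cyl_prod(1)[where m=m and k=k and P=P and R=R]
    by (simp add: emeasure_cyl_mu ennreal_mult' mu_nonneg)
  then show "mu (m+k) (\<lambda>w. P (take m w) \<and> R (drop m w)) \<le> 4 * mu m P * mu k R"
    by (subst (asm) ennreal_le_iff) (auto simp: mu_nonneg)
  have B: "ennreal (mu m P * mu k R) \<le> ennreal (8 * mu (m+k) (\<lambda>w. P (take m w) \<and> R (drop m w)))"
    using cyl_prod(2)[where m=m and k=k and P=P and R=R]
    by (simp add: emeasure_cyl_mu ennreal_mult' mu_nonneg)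
  then show "mu m P * mu k R \<le> 8 * mu (m+k) (\<lambda>w. P (take m w) \<and> R (drop m w))"
    by (subst (asm) ennreal_le_iff) (auto simp: mu_nonneg)
qed

lemma Om_dig_words: "x \<in> Om \<Longrightarrow> dig n x \<in> words n"
  using Om_decomp[of x n] by (auto simp: words_def)

lemma cyl_cong: "(\<And>u. u \<in> words n \<Longrightarrow> P u = P' u) \<Longrightarrow> cyl n P = cyl n P'"
  using Om_dig_words by (auto simp: cyl_def)

lemma mu_cong: "(\<And>u. u \<in> words n \<Longrightarrow> P u = P' u) \<Longrightarrow> mu n P = mu n P'"
  unfolding mu_def using cyl_cong by metis

lemma cyl_mono: "(\<And>u. u \<in> words n \<Longrightarrow> P u \<Longrightarrow> P' u) \<Longrightarrow> cyl n P \<subseteq> cyl n P'"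
  using Om_dig_words by (auto simp: cyl_def)

lemma mu_mono: "(\<And>u. u \<in> words n \<Longrightarrow> P u \<Longrightarrow> P' u) \<Longrightarrow> mu n P \<le> mu n P'"
  unfolding mu_def using cyl_mono cyl_fmeas by (metis measure_mono_fmeasurable cyl_sets)

lemma cyl_take: "m \<le> N \<Longrightarrow> cyl N (\<lambda>u. Q (take m u)) = cyl m Q"
  using dig_take[of m N] by (auto simp: cyl_def)

lemma mu_take: "m \<le> N \<Longrightarrow> mu N (\<lambda>u. Q (take m u)) = mu m Q"
  by (simp add: mu_def cyl_take)

lemma cyl_True: "cyl n (\<lambda>_. True) = Om" by (auto simp: cyl_def)

lemma mu_True: "mu n (\<lambda>_. True) = 1"
  unfolding mu_def cyl_True using emeasure_Om by (simp add: measure_def)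

lemma mu_single: "w \<in> words n \<Longrightarrow> mu n (\<lambda>u. u = w) = nu w"
proof -
  assume w: "w \<in> words n"
  have "{u \<in> words n. u = w} = {w}" using w by auto
  then have "emeasure lborel (cyl n (\<lambda>u. u = w)) = ennreal (nu w)"
    unfolding emeasure_cyl by (simp add: nn_integral_count_space_finite)
  then have "ennreal (mu n (\<lambda>u. u = w)) = ennreal (nu w)" by (simp add: emeasure_cyl_mu)
  then show ?thesis using nu_pos[of w] w mu_nonneg[of n "\<lambda>u. u = w"]
    by (simp add: words_def ennreal_inj)
qed

lemma cyl_and: "cyl n (\<lambda>u. P u \<and> Q u) = cyl n P \<inter> cyl n Q" by (auto simp: cyl_def)
lemma cyl_or: "cyl n (\<lambda>u. P u \<or> Q u) = cyl n P \<union> cyl n Q" by (auto simp: cyl_def)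

lemma mu_or: "mu n (\<lambda>u. P u \<or> Q u) \<le> mu n P + mu n Q"
  unfolding mu_def cyl_or by (rule measure_Un_le) auto

lemma mu_diff: "mu n (\<lambda>u. P u \<and> \<not> Q u) = mu n P - mu n (\<lambda>u. P u \<and> Q u)"
proof -
  have "cyl n (\<lambda>u. P u \<and> \<not> Q u) = cyl n P - cyl n (\<lambda>u. P u \<and> Q u)" by (auto simp: cyl_def)
  moreover have "measure lborel (cyl n P - cyl n (\<lambda>u. P u \<and> Q u)) = measure lborel (cyl n P) - measure lborel (cyl n (\<lambda>u. P u \<and> Q u))"
    apply (rule measure_Diff[OF _ cyl_sets cyl_sets])
     apply (simp add: emeasure_cyl_mu)
    by (auto simp: cyl_def)
  ultimately show ?thesis unfolding mu_def by simp
qed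

lemma mu_ex: "finite I \<Longrightarrow> mu n (\<lambda>u. \<exists>i\<in>I. P i u) \<le> (\<Sum>i\<in>I. mu n (P i))"
proof -
  assume I: "finite I"
  have "cyl n (\<lambda>u. \<exists>i\<in>I. P i u) = (\<Union>i\<in>I. cyl n (P i))" by (auto simp: cyl_def)
  then show ?thesis unfolding mu_def using measure_UNION_le[OF I, of "\<lambda>i. cyl n (P i)" lborel] by simp
qed

lemma dig1: "x \<in> Om \<Longrightarrow> dig 1 x = [nat \<lfloor>1/x\<rfloor>]"
  using cf_quot_Suc[of x 0] Om_subset by (auto simp: dig_def)

lemma cyl1: "cyl 1 (\<lambda>v. Q (v!0)) = {x\<in>Om. Q (nat \<lfloor>1/x\<rfloor>)}"
  using dig1 by (auto simp: cyl_def)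

lemma mu1_gt: "mu 1 (\<lambda>v. M < v!0) \<le> 1 / (real M + 1)"
proof -
  have "{x\<in>Om. M < nat \<lfloor>1/x\<rfloor>} \<subseteq> {0<..1 / (real M + 1)}"
  proof
    fix x assume x: "x \<in> {x\<in>Om. M < nat \<lfloor>1/x\<rfloor>}"
    then have x0: "0 < x" by (auto simp: Om_def)
    have "int M + 1 \<le> \<lfloor>1/x\<rfloor>" using x by auto
    then have "real_of_int (int M + 1) \<le> of_int \<lfloor>1/x\<rfloor>" by (simp only: of_int_le_iff)
    then have "real M + 1 \<le> of_int \<lfloor>1/x\<rfloor>" by simp
    also have "\<dots> \<le> 1/x" by simp
    finally show "x \<in> {0<..1 / (real M + 1)}" using x0 by (simp add: field_simps)
  qed
  then have "measure lborel {x\<in>Om. M < nat \<lfloor>1/x\<rfloor>} \<le> measure lborel {0<..1 / (real M + 1)}"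
    using cyl_sets[of 1 "\<lambda>v. M < v!0"] cyl1[of "\<lambda>j. M < j"]
    by (intro measure_mono_fmeasurable) (auto intro: fm_Ioc)
  then show ?thesis unfolding mu_def using cyl1[of "\<lambda>j. M < j"] by simp
qed

lemma mu1_eq: "1 \<le> k \<Longrightarrow> mu 1 (\<lambda>v. v!0 = k) \<le> 1 / (real k * (real k + 1))"
proof -
  assume k: "1 \<le> k"
  have "{x\<in>Om. nat \<lfloor>1/x\<rfloor> = k} \<subseteq> {1 / (real k + 1)<..1 / real k}"
  proof
    fix x assume x: "x \<in> {x\<in>Om. nat \<lfloor>1/x\<rfloor> = k}"
    then have x0: "0 < x" by (auto simp: Om_def)
    have f: "\<lfloor>1/x\<rfloor> = int k" using x k by auto
    have "real k \<le> 1/x" "1/x < real k + 1" using f by linarith+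
    then show "x \<in> {1 / (real k + 1)<..1 / real k}" using x0 k by (auto simp: field_simps)
  qed
  then have "measure lborel {x\<in>Om. nat \<lfloor>1/x\<rfloor> = k} \<le> measure lborel {1 / (real k + 1)<..1 / real k}"
    using cyl_sets[of 1 "\<lambda>v. v!0 = k"] cyl1[of "\<lambda>j. j = k"]
    by (intro measure_mono_fmeasurable) (auto intro: fm_Ioc)
  also have "\<dots> = 1 / real k - 1 / (real k + 1)"
    using k by (simp add: frac_le)
  also have "\<dots> = 1 / (real k * (real k + 1))" using k by (simp add: field_simps)
  finally show ?thesis unfolding mu_def using cyl1[of "\<lambda>j. j = k"] by simp
qed

lemma mu1_range: "1 \<le> lo \<Longrightarrow> lo \<le> hi \<Longrightarrow> 1 / real lo - 1 / (real hi + 1) \<le> mu 1 (\<lambda>v. lo \<le> v!0 \<and> v!0 \<le> hi)"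
proof -
  assume lo: "1 \<le> lo" and h: "lo \<le> hi"
  have sub: "{1 / (real hi + 1)<..<1 / real lo} - \<rat> \<subseteq> {x\<in>Om. lo \<le> nat \<lfloor>1/x\<rfloor> \<and> nat \<lfloor>1/x\<rfloor> \<le> hi}"
  proof
    fix x assume x: "x \<in> {1 / (real hi + 1)<..<1 / real lo} - \<rat>"
    have x0: "0 < x" using x by (auto intro: less_trans[rotated])
    have "x * real lo < 1" using x x0 lo by (auto simp: field_simps)
    moreover have "x \<le> x * real lo" using x0 lo by simp
    ultimately have "x < 1" by linarith
    then have xO: "x \<in> Om" using x x0 by (auto simp: Om_def)
    have a: "real lo < 1/x" using x x0 lo by (auto simp: field_simps)
    have b: "1/x < real hi + 1" using x x0 h by (auto simp: field_simps)
    have "lo \<le> nat \<lfloor>1/x\<rfloor>" using a by linarith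
    moreover have "nat \<lfloor>1/x\<rfloor> \<le> hi" using b by linarith
    ultimately show "x \<in> {x\<in>Om. lo \<le> nat \<lfloor>1/x\<rfloor> \<and> nat \<lfloor>1/x\<rfloor> \<le> hi}" using xO by simp
  qed
  have "measure lborel ({1 / (real hi + 1)<..<1 / real lo} - \<rat>) = measure lborel {1 / (real hi + 1)<..<1 / real lo}"
    unfolding measure_def
    by (subst emeasure_Diff_null_set[OF countable_imp_null_set_lborel[OF countable_rat]]) auto
  also have "\<dots> = 1 / real lo - 1 / (real hi + 1)" using lo h by (simp add: frac_le)
  finally have "1 / real lo - 1 / (real hi + 1) = measure lborel ({1 / (real hi + 1)<..<1 / real lo} - \<rat>)" ..
  also have "\<dots> \<le> measure lborel {x\<in>Om. lo \<le> nat \<lfloor>1/x\<rfloor> \<and> nat \<lfloor>1/x\<rfloor> \<le> hi}"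
    using sub cyl_fmeas[of 1 "\<lambda>v. lo \<le> v!0 \<and> v!0 \<le> hi"] cyl1[of "\<lambda>j. lo \<le> j \<and> j \<le> hi"]
    by (intro measure_mono_fmeasurable) auto
  finally show ?thesis unfolding mu_def using cyl1[of "\<lambda>j. lo \<le> j \<and> j \<le> hi"] by simp
qed

lemma mu_digit: "l < N \<Longrightarrow> mu N (\<lambda>v. Q (v!l)) \<le> 4 * mu 1 (\<lambda>v. Q (v!0))"
proof -
  assume l: "l < N"
  have "mu N (\<lambda>v. Q (v!l)) = mu N (\<lambda>v. Q (take (l+1) v ! l))"
    by (intro mu_cong) (auto simp: words_def l)
  also have "\<dots> = mu (l+1) (\<lambda>v. Q (v!l))" using l by (subst mu_take) auto
  also have "\<dots> = mu (l+1) (\<lambda>w. (\<lambda>_. True) (take l w) \<and> (\<lambda>z. Q (z!0)) (drop l w))"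
    by (intro mu_cong) (auto simp: words_def)
  also have "\<dots> \<le> 4 * mu l (\<lambda>_. True) * mu 1 (\<lambda>z. Q (z!0))" by (rule mu_prod(1))
  finally show ?thesis by (simp add: mu_True)
qed



lemma emeasure_cyl_UNIV:
  "emeasure lborel (cyl n P) = (\<integral>\<^sup>+u. ennreal (if u \<in> words n \<and> P u then nu u else 0) \<partial>count_space UNIV)"
  unfolding emeasure_cyl
  apply (subst nn_integral_count_space_indicator)
   apply simp
  apply (intro nn_integral_cong)
  by (auto split: split_indicator)

lemma markov_words:
  fixes c :: "'i \<Rightarrow> real" and A :: "'i \<Rightarrow> nat list \<Rightarrow> bool"
  assumes I: "finite I" and t: "t > 0" and c: "\<And>i. i \<in> I \<Longrightarrow> 0 \<le> c i"
    and H: "\<And>u. u \<in> words L \<Longrightarrow> Q u \<Longrightarrow> t \<le> (\<Sum>i\<in>I. if A i u then c i else 0)"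
  shows "t * mu L Q \<le> (\<Sum>i\<in>I. c i * mu L (A i))"
proof -
  define g where "g P u = (if u \<in> words L \<and> P u then nu u else 0)" for P u
  have g0: "0 \<le> g P u" for P u using nu_pos[of u] by (auto simp: g_def words_def)
  have mu_g: "ennreal (mu L P) = (\<integral>\<^sup>+u. ennreal (g P u) \<partial>count_space UNIV)" for P
    using emeasure_cyl_UNIV[of L P] by (simp add: emeasure_cyl_mu g_def)
  have "ennreal (t * mu L Q) = ennreal t * ennreal (mu L Q)"
    using t by (simp add: ennreal_mult')
  also have "\<dots> = (\<integral>\<^sup>+u. ennreal t * ennreal (g Q u) \<partial>count_space UNIV)"
    unfolding mu_g by (simp add: nn_integral_cmult)
  also have "\<dots> \<le> (\<integral>\<^sup>+u. (\<Sum>i\<in>I. ennreal (c i * g (A i) u)) \<partial>count_space UNIV)"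
  proof (intro nn_integral_mono)
    fix u :: "nat list"
    have pt: "t * g Q u \<le> (\<Sum>i\<in>I. c i * g (A i) u)"
    proof (cases "u \<in> words L \<and> Q u")
      case True
      then have "t * nu u \<le> (\<Sum>i\<in>I. if A i u then c i else 0) * nu u"
        using H[of u] nu_pos[of u] by (intro mult_right_mono) (auto simp: words_def)
      also have "\<dots> = (\<Sum>i\<in>I. c i * g (A i) u)"
        unfolding sum_distrib_right using True by (intro sum.cong) (auto simp: g_def)
      moreover have "g Q u = nu u" using True by (simp add: g_def)
      ultimately show ?thesis by simp
    next
      case False
      then have "g Q u = 0" unfolding g_def by auto
      moreover have "0 \<le> (\<Sum>i\<in>I. c i * g (A i) u)" using c g0 by (intro sum_nonneg) auto
      ultimately show ?thesis by simp
    qed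
    have "ennreal t * ennreal (g Q u) = ennreal (t * g Q u)" using t by (simp add: ennreal_mult')
    also have "\<dots> \<le> ennreal (\<Sum>i\<in>I. c i * g (A i) u)" using pt by (rule ennreal_leI)
    also have "\<dots> = (\<Sum>i\<in>I. ennreal (c i * g (A i) u))"
      using c g0 by (subst sum_ennreal) auto
    finally show "ennreal t * ennreal (g Q u) \<le> (\<Sum>i\<in>I. ennreal (c i * g (A i) u))" .
  qed
  also have "\<dots> = (\<Sum>i\<in>I. (\<integral>\<^sup>+u. ennreal (c i * g (A i) u) \<partial>count_space UNIV))"
    by (rule nn_integral_sum) simp
  also have "\<dots> = (\<Sum>i\<in>I. ennreal (c i * mu L (A i)))"
  proof (intro sum.cong refl)
    fix i assume i: "i \<in> I"
    have "(\<integral>\<^sup>+u. ennreal (c i * g (A i) u) \<partial>count_space UNIV) = (\<integral>\<^sup>+u. ennreal (c i) * ennreal (g (A i) u) \<partial>count_space UNIV)"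
      using c[OF i] by (intro nn_integral_cong) (simp add: ennreal_mult')
    also have "\<dots> = ennreal (c i) * ennreal (mu L (A i))"
      unfolding mu_g by (simp add: nn_integral_cmult)
    also have "\<dots> = ennreal (c i * mu L (A i))" using c[OF i] by (simp add: ennreal_mult')
    finally show "(\<integral>\<^sup>+u. ennreal (c i * g (A i) u) \<partial>count_space UNIV) = ennreal (c i * mu L (A i))" .
  qed
  also have "\<dots> = ennreal (\<Sum>i\<in>I. c i * mu L (A i))"
    using c mu_nonneg by (subst sum_ennreal) auto
  finally show ?thesis
    using c mu_nonneg by (subst (asm) ennreal_le_iff) (auto intro!: sum_nonneg)
qed

lemma harm_ln: "(\<Sum>k=1..M. 1 / (real k + 1)) \<le> ln (real M + 1)"
proof (induction M)
  case 0
  then show ?case by simp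
next
  case (Suc M)
  have a: "0 < (real M + 1) / (real M + 2)" by simp
  have "ln ((real M + 1) / (real M + 2)) \<le> (real M + 1) / (real M + 2) - 1"
    by (rule ln_le_minus_one[OF a])
  also have "\<dots> = - (1 / (real M + 2))" by (simp add: field_simps)
  finally have b: "1 / (real M + 2) \<le> ln (real M + 2) - ln (real M + 1)"
    by (simp add: ln_div)
  have "(\<Sum>k=1..Suc M. 1 / (real k + 1)) = (\<Sum>k=1..M. 1 / (real k + 1)) + 1 / (real M + 2)"
    by (simp add: add.commute)
  also have "\<dots> \<le> ln (real M + 1) + (ln (real M + 2) - ln (real M + 1))"
    using Suc b by linarith
  also have "\<dots> = ln (real (Suc M) + 1)" by (simp add: add.commute)
  finally show ?case .
qed

lemma mu_digit_eq: "l < N \<Longrightarrow> 1 \<le> k \<Longrightarrow> mu N (\<lambda>v. v!l = k) \<le> 4 / (real k * (real k + 1))"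
proof -
  assume l: "l < N" and k: "1 \<le> k"
  have "mu N (\<lambda>v. v!l = k) \<le> 4 * mu 1 (\<lambda>v. v!0 = k)" using mu_digit[OF l, of "\<lambda>j. j = k"] by simp
  also have "\<dots> \<le> 4 * (1 / (real k * (real k + 1)))" using mu1_eq[OF k] by simp
  finally show ?thesis by simp
qed

lemma mu_digit_gt: "l < N \<Longrightarrow> mu N (\<lambda>v. M < v!l) \<le> 4 / (real M + 1)"
proof -
  assume l: "l < N"
  have "mu N (\<lambda>v. M < v!l) \<le> 4 * mu 1 (\<lambda>v. M < v!0)" using mu_digit[OF l, of "\<lambda>j. M < j"] by simp
  also have "\<dots> \<le> 4 * (1 / (real M + 1))" using mu1_gt[of M] by simp
  finally show ?thesis by simp
qed



lemma words_nth_pos: "v \<in> words L \<Longrightarrow> l < L \<Longrightarrow> 1 \<le> v!l"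
  by (auto simp: words_def pos_def) (metis Suc_leI nth_mem)

lemma tail_bound:
  assumes LK: "L < K" and K64: "64 \<le> K"
  shows "mu L (\<lambda>v. 128 * real K * ln (real K) < real (sum_list v)) \<le> 1/8"
proof -
  define M where "M = K^2 - 1"
  have K1: "1 \<le> K" using K64 by simp
  have M1: "real M + 1 = real K ^ 2"
  proof -
    have "1 \<le> K^2" using K1 by simp
    then have "M + 1 = K^2" by (simp add: M_def)
    then show ?thesis by (metis of_nat_1 of_nat_add of_nat_power)
  qed
  have lnK: "1 \<le> ln (real K)"
  proof -
    have "exp 1 \<le> (3::real)" using exp_le by simp
    also have "\<dots> \<le> real K" using K64 by simp
    finally show ?thesis using K1 by (simp add: ln_ge_iff)
  qed
  define t where "t = 128 * real K * ln (real K)"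
  have Kp: "0 < real K" using K1 by simp
  have lp: "0 < ln (real K)" using lnK by simp
  have t0: "t > 0" unfolding t_def using Kp lp by simp
  define F where "F v = (\<Sum>l<L. if v!l \<le> M then real (v!l) else 0)" for v
  have step1: "mu L (\<lambda>v. t < real (sum_list v)) \<le> mu L (\<lambda>v. (\<exists>l\<in>{..<L}. M < v!l) \<or> t < F v)"
  proof (rule mu_mono)
    fix v assume v: "v \<in> words L" and s: "t < real (sum_list v)"
    show "(\<exists>l\<in>{..<L}. M < v!l) \<or> t < F v"
    proof (cases "\<exists>l\<in>{..<L}. M < v!l")
      case False
      have "real (sum_list v) = (\<Sum>l<L. real (v!l))"
        using v by (simp add: sum_list_sum_nth words_def atLeast0LessThan)
      also have "\<dots> = F v" unfolding F_def
      proof (intro sum.cong refl)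
        fix l assume "l \<in> {..<L}"
        then have "v!l \<le> M" using False by (meson not_less)
        then show "real (v!l) = (if v!l \<le> M then real (v!l) else 0)" by simp
      qed
      finally show ?thesis using s by simp
    qed simp
  qed
  have step2: "mu L (\<lambda>v. (\<exists>l\<in>{..<L}. M < v!l) \<or> t < F v)
      \<le> (\<Sum>l<L. mu L (\<lambda>v. M < v!l)) + mu L (\<lambda>v. t < F v)"
    using mu_or[of L "\<lambda>v. \<exists>l\<in>{..<L}. M < v!l" "\<lambda>v. t < F v"]
      mu_ex[of "{..<L}" L "\<lambda>l v. M < v!l"] by simp
  have step3: "(\<Sum>l<L. mu L (\<lambda>v. M < v!l)) \<le> 1/16"
  proof -
    have "(\<Sum>l<L. mu L (\<lambda>v. M < v!l)) \<le> (\<Sum>l<L. 4 / (real M + 1))"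
      by (intro sum_mono mu_digit_gt) auto
    also have "\<dots> = real L * (4 / real K ^ 2)" by (simp add: M1)
    also have "\<dots> \<le> real K * (4 / real K ^ 2)" using LK by (intro mult_right_mono) auto
    also have "\<dots> = 4 / real K" using K1 by (simp add: power2_eq_square)
    also have "\<dots> \<le> 1/16" using K64 by (simp add: field_simps)
    finally show ?thesis .
  qed
  have step4: "t * mu L (\<lambda>v. t < F v) \<le> (\<Sum>i\<in>{..<L} \<times> {1..M}. real (snd i) * mu L (\<lambda>v. v!(fst i) = snd i))"
  proof (rule markov_words)
    fix v assume v: "v \<in> words L" and tv: "t < F v"
    have "F v = (\<Sum>l<L. \<Sum>k\<in>{1..M}. if v!l = k then real k else 0)"
      unfolding F_def
    proof (intro sum.cong refl)
      fix l assume l: "l \<in> {..<L}"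
      have p: "1 \<le> v!l" using words_nth_pos[OF v] l by simp
      have "(\<Sum>k\<in>{1..M}. if v!l = k then real k else 0) = (if v!l \<in> {1..M} then real (v!l) else 0)"
        using sum.delta'[of "{1..M}" "v!l" real] by simp
      then show "(if v!l \<le> M then real (v!l) else 0) = (\<Sum>k\<in>{1..M}. if v!l = k then real k else 0)"
        using p by simp
    qed
    also have "\<dots> = (\<Sum>i\<in>{..<L} \<times> {1..M}. if v!(fst i) = snd i then real (snd i) else 0)"
      by (subst sum.cartesian_product) (simp add: case_prod_beta)
    finally show "t \<le> (\<Sum>i\<in>{..<L} \<times> {1..M}. if v!(fst i) = snd i then real (snd i) else 0)"
      using tv by simp
  qed (use t0 in auto)
  have step5: "(\<Sum>i\<in>{..<L} \<times> {1..M}. real (snd i) * mu L (\<lambda>v. v!(fst i) = snd i)) \<le> 8 * real K * ln (real K)"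
  proof -
    have "(\<Sum>i\<in>{..<L} \<times> {1..M}. real (snd i) * mu L (\<lambda>v. v!(fst i) = snd i))
        \<le> (\<Sum>i\<in>{..<L} \<times> {1..M}. 4 / (real (snd i) + 1))"
    proof (intro sum_mono)
      fix i assume i: "i \<in> {..<L} \<times> {1..M}"
      then have l: "fst i < L" and k: "1 \<le> snd i" by auto
      have "real (snd i) * mu L (\<lambda>v. v!(fst i) = snd i) \<le> real (snd i) * (4 / (real (snd i) * (real (snd i) + 1)))"
        using mu_digit_eq[OF l k] by (intro mult_left_mono) auto
      also have "\<dots> = (real (snd i) * 4) / (real (snd i) * (real (snd i) + 1))" by simp
      also have "\<dots> = 4 / (real (snd i) + 1)" using k by (subst mult_divide_mult_cancel_left) auto
      finally show "real (snd i) * mu L (\<lambda>v. v!(fst i) = snd i) \<le> 4 / (real (snd i) + 1)" .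
    qed
    also have "\<dots> = (\<Sum>l<L. \<Sum>k\<in>{1..M}. 4 / (real k + 1))"
    proof -
      have "(\<Sum>l<L. \<Sum>k\<in>{1..M}. 4 / (real k + 1)) = (\<Sum>(l,k)\<in>{..<L}\<times>{1..M}. 4 / (real k + 1))"
        by (rule sum.cartesian_product)
      then show ?thesis by (simp add: case_prod_beta)
    qed
    also have "\<dots> = real L * (4 * (\<Sum>k=1..M. 1 / (real k + 1)))"
      by (simp add: sum_distrib_left)
    also have "\<dots> \<le> real K * (4 * ln (real M + 1))"
    proof -
      have h: "(\<Sum>k=1..M. 1 / (real k + 1)) \<le> ln (real M + 1)" by (rule harm_ln)
      have h0: "0 \<le> (\<Sum>k=1..M. 1 / (real k + 1))" by (intro sum_nonneg) auto
      show ?thesis by (intro mult_mono) (use LK h h0 in auto)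
    qed
    also have "ln (real M + 1) = 2 * ln (real K)" using K1 by (simp add: M1 ln_realpow)
    finally show ?thesis by simp
  qed
  have step6: "mu L (\<lambda>v. t < F v) \<le> 1/16"
  proof -
    have e: "8 * real K * ln (real K) = t * (1/16)" by (simp add: t_def)
    have "t * mu L (\<lambda>v. t < F v) \<le> t * (1/16)" using step4 step5 e by linarith
    then show ?thesis using t0 by (simp add: mult_le_cancel_left_pos)
  qed
  show ?thesis using step1 step2 step3 step6 unfolding t_def by linarith
qed



definition Rng :: "(real \<Rightarrow> real) \<Rightarrow> nat \<Rightarrow> nat set" where
  "Rng \<psi> K = {k. \<psi> (real K) < real k \<and> real k < real K ^ 2}"

definition rr :: "(real \<Rightarrow> real) \<Rightarrow> nat \<Rightarrow> real" where
  "rr \<psi> K = mu 1 (\<lambda>v. v!0 \<in> Rng \<psi> K)"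

definition Dp :: "(real \<Rightarrow> real) \<Rightarrow> nat \<Rightarrow> nat list \<Rightarrow> bool" where
  "Dp \<psi> K u = (real (sum_list (take (K-1) u)) \<le> 256 * real K * ln (real K) \<and> u!(K-1) \<in> Rng \<psi> K)"

lemma rr_nonneg: "0 \<le> rr \<psi> K" by (simp add: rr_def mu_nonneg)

lemma nu_nonneg: "w \<in> words n \<Longrightarrow> 0 \<le> nu w"
  using nu_pos[of w] by (simp add: words_def)

lemma lower_bound:
  assumes w: "w \<in> words n" and nK: "n < K" and K64: "64 \<le> K"
    and sw: "real (sum_list w) \<le> 128 * real K * ln (real K)"
  shows "nu w * rr \<psi> K / 16 \<le> mu K (\<lambda>u. take n u = w \<and> Dp \<psi> K u)"
proof -
  define B where "B = 256 * real K * ln (real K)"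
  define P where "P v = (take n v = w \<and> real (sum_list v) \<le> B)" for v
  define R where "R z = (z!0 \<in> Rng \<psi> K)" for z
  have KK: "K - 1 + 1 = K" using nK by simp
  have eq1: "mu K (\<lambda>u. take n u = w \<and> Dp \<psi> K u) = mu K (\<lambda>u. P (take (K-1) u) \<and> R (drop (K-1) u))"
  proof (intro mu_cong)
    fix u assume u: "u \<in> words K"
    then have lu: "length u = K" by (simp add: words_def)
    have mn: "min n (K-1) = n" using nK by simp
    have a: "take n (take (K-1) u) = take n u" using mn by (metis take_take)
    have b: "drop (K-1) u ! 0 = u ! (K-1)" using lu nK by simp
    show "(take n u = w \<and> Dp \<psi> K u) = (P (take (K-1) u) \<and> R (drop (K-1) u))"
      unfolding P_def R_def Dp_def B_def a b by auto
  qed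
  have pr: "mu (K-1) P * mu 1 R \<le> 8 * mu K (\<lambda>u. P (take (K-1) u) \<and> R (drop (K-1) u))"
    using mu_prod(2)[of "K-1" P 1 R, unfolded KK] .
  have R1: "mu 1 R = rr \<psi> K" unfolding rr_def by (intro mu_cong) (simp add: R_def)
  have t1: "mu (K-1) (\<lambda>v. take n v = w) = nu w"
    using mu_take[of n "K-1" "\<lambda>v. v = w"] nK mu_single[OF w] by simp
  have nn: "n + (K - 1 - n) = K - 1" using nK by simp
  have t2: "mu (K-1) (\<lambda>v. take n v = w \<and> B < real (sum_list v)) \<le> nu w / 2"
  proof -
    have "mu (K-1) (\<lambda>v. take n v = w \<and> B < real (sum_list v))
        \<le> mu (K-1) (\<lambda>v. (\<lambda>z. z = w) (take n v) \<and> (\<lambda>z. 128 * real K * ln (real K) < real (sum_list z)) (drop n v))"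
    proof (intro mu_mono)
      fix v assume v: "v \<in> words (K-1)" and h: "take n v = w \<and> B < real (sum_list v)"
      have "sum_list v = sum_list (take n v) + sum_list (drop n v)"
        by (metis append_take_drop_id sum_list_append)
      then have "real (sum_list v) = real (sum_list w) + real (sum_list (drop n v))" using h by simp
      then show "(\<lambda>z. z = w) (take n v) \<and> (\<lambda>z. 128 * real K * ln (real K) < real (sum_list z)) (drop n v)"
        using h sw unfolding B_def by auto
    qed
    also have "\<dots> \<le> 4 * mu n (\<lambda>z. z = w) * mu (K - 1 - n) (\<lambda>z. 128 * real K * ln (real K) < real (sum_list z))"
      using mu_prod(1)[of n "K - 1 - n" "\<lambda>z. z = w" "\<lambda>z. 128 * real K * ln (real K) < real (sum_list z)", unfolded nn] .
    also have "\<dots> = 4 * nu w * mu (K - 1 - n) (\<lambda>z. 128 * real K * ln (real K) < real (sum_list z))"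
      by (simp add: mu_single[OF w])
    also have "\<dots> \<le> 4 * nu w * (1/8)"
    proof (rule mult_left_mono)
      show "mu (K - 1 - n) (\<lambda>z. 128 * real K * ln (real K) < real (sum_list z)) \<le> 1/8"
        by (rule tail_bound) (use nK K64 in auto)
      show "0 \<le> 4 * nu w" using nu_nonneg[OF w] by simp
    qed
    finally show ?thesis by simp
  qed
  have md: "mu (K-1) P = mu (K-1) (\<lambda>v. take n v = w) - mu (K-1) (\<lambda>v. take n v = w \<and> B < real (sum_list v))"
  proof -
    have "mu (K-1) P = mu (K-1) (\<lambda>v. take n v = w \<and> \<not> B < real (sum_list v))"
      by (intro mu_cong) (auto simp: P_def not_less)
    then show ?thesis by (simp add: mu_diff)
  qed
  have mP: "nu w / 2 \<le> mu (K-1) P" using md t1 t2 by linarith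
  have "nu w / 2 * rr \<psi> K \<le> mu (K-1) P * rr \<psi> K"
    using mP rr_nonneg by (intro mult_right_mono) auto
  also have "\<dots> \<le> 8 * mu K (\<lambda>u. take n u = w \<and> Dp \<psi> K u)" using pr R1 eq1 by simp
  finally show ?thesis by simp
qed

lemma pair_bound:
  assumes w: "w \<in> words n" and ni: "n < i" and ij: "i < j"
  shows "mu j (\<lambda>u. take n u = w \<and> Dp \<psi> i (take i u) \<and> Dp \<psi> j u) \<le> 256 * nu w * rr \<psi> i * rr \<psi> j"
proof -
  define Q2 where "Q2 z = (z!(i-n-1) \<in> Rng \<psi> i \<and> z!(j-n-1) \<in> Rng \<psi> j)" for z
  define Q3 where "Q3 y = (y!(i-n-1) \<in> Rng \<psi> i)" for y
  define Q4 where "Q4 y = (y!(j-i-1) \<in> Rng \<psi> j)" for y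
  have jj: "n + (j - n) = j" using ni ij by simp
  have ii: "(i - n) + (j - i) = j - n" using ni ij by simp
  have "mu j (\<lambda>u. take n u = w \<and> Dp \<psi> i (take i u) \<and> Dp \<psi> j u)
      \<le> mu j (\<lambda>u. (\<lambda>z. z = w) (take n u) \<and> Q2 (drop n u))"
  proof (intro mu_mono)
    fix u assume u: "u \<in> words j" and h: "take n u = w \<and> Dp \<psi> i (take i u) \<and> Dp \<psi> j u"
    have lu: "length u = j" using u by (simp add: words_def)
    have a: "take i u ! (i-1) = u ! (i-1)" using ni by simp
    have b: "drop n u ! (i-n-1) = u ! (i-1)" using lu ni ij by simp
    have c: "drop n u ! (j-n-1) = u ! (j-1)" using lu ni ij by simp
    show "(\<lambda>z. z = w) (take n u) \<and> Q2 (drop n u)"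
      using h unfolding Q2_def Dp_def a b c by simp
  qed
  also have "\<dots> \<le> 4 * mu n (\<lambda>z. z = w) * mu (j - n) Q2"
    using mu_prod(1)[of n "j - n" "\<lambda>z. z = w" Q2, unfolded jj] .
  also have "mu (j - n) Q2 = mu (j - n) (\<lambda>z. Q3 (take (i-n) z) \<and> Q4 (drop (i-n) z))"
  proof (intro mu_cong)
    fix z assume z: "z \<in> words (j - n)"
    have lz: "length z = j - n" using z by (simp add: words_def)
    have a: "take (i-n) z ! (i-n-1) = z ! (i-n-1)" using ni by simp
    have b: "drop (i-n) z ! (j-i-1) = z ! (j-n-1)"
    proof -
      have "drop (i-n) z ! (j-i-1) = z ! (i - n + (j-i-1))" using lz ni ij by simp
      also have "i - n + (j-i-1) = j-n-1" using ni ij by simp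
      finally show ?thesis .
    qed
    show "Q2 z = (Q3 (take (i-n) z) \<and> Q4 (drop (i-n) z))"
      unfolding Q2_def Q3_def Q4_def a b by simp
  qed
  also have "\<dots> \<le> 4 * mu (i-n) Q3 * mu (j-i) Q4"
    using mu_prod(1)[of "i-n" "j-i" Q3 Q4, unfolded ii] .
  finally have X: "mu j (\<lambda>u. take n u = w \<and> Dp \<psi> i (take i u) \<and> Dp \<psi> j u)
      \<le> 4 * nu w * (4 * mu (i-n) Q3 * mu (j-i) Q4)"
    using mu_single[OF w] nu_nonneg[OF w] by (simp add: mult_left_mono)
  have q3: "mu (i-n) Q3 \<le> 4 * rr \<psi> i"
    unfolding Q3_def rr_def using mu_digit[of "i-n-1" "i-n" "\<lambda>k. k \<in> Rng \<psi> i"] ni by simp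
  have q4: "mu (j-i) Q4 \<le> 4 * rr \<psi> j"
    unfolding Q4_def rr_def using mu_digit[of "j-i-1" "j-i" "\<lambda>k. k \<in> Rng \<psi> j"] ij by simp
  have "4 * mu (i-n) Q3 * mu (j-i) Q4 \<le> 4 * (4 * rr \<psi> i) * (4 * rr \<psi> j)"
    using q3 q4 mu_nonneg rr_nonneg by (intro mult_mono) auto
  then have "4 * nu w * (4 * mu (i-n) Q3 * mu (j-i) Q4) \<le> 4 * nu w * (4 * (4 * rr \<psi> i) * (4 * rr \<psi> j))"
    using nu_nonneg[OF w] by (intro mult_left_mono) auto
  then show ?thesis using X by (simp add: algebra_simps)
qed



lemma bonf:
  fixes A :: "nat \<Rightarrow> real set"
  assumes "finite S" "\<And>i. i \<in> S \<Longrightarrow> A i \<in> fmeasurable lborel"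
  shows "(\<Sum>i\<in>S. measure lborel (A i)) - (\<Sum>i\<in>S. \<Sum>j\<in>{j\<in>S. j < i}. measure lborel (A j \<inter> A i))
           \<le> measure lborel (\<Union>i\<in>S. A i)"
  using assms
proof (induction S rule: finite_linorder_max_induct)
  case empty
  then show ?case by simp
next
  case (insert b S)
  have fm: "\<And>i. i \<in> S \<Longrightarrow> A i \<in> fmeasurable lborel" using insert.prems by auto
  have fb: "A b \<in> fmeasurable lborel" using insert.prems by auto
  have IH: "(\<Sum>i\<in>S. measure lborel (A i)) - (\<Sum>i\<in>S. \<Sum>j\<in>{j\<in>S. j < i}. measure lborel (A j \<inter> A i))
           \<le> measure lborel (\<Union>i\<in>S. A i)" using insert.IH fm by blast
  have bS: "b \<notin> S" using insert.hyps by auto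
  define X where "X = (\<Union>i\<in>S. A i)"
  have fX: "X \<in> fmeasurable lborel" unfolding X_def using fm insert.hyps(1)
    by (intro fmeasurable.finite_UN) auto
  have un: "measure lborel (X \<union> A b) = measure lborel X + measure lborel (A b) - measure lborel (X \<inter> A b)"
    by (rule measure_Un3[OF fX fb])
  have int: "measure lborel (X \<inter> A b) \<le> (\<Sum>j\<in>S. measure lborel (A j \<inter> A b))"
  proof -
    have "X \<inter> A b = (\<Union>j\<in>S. A j \<inter> A b)" by (auto simp: X_def)
    then show ?thesis using measure_UNION_le[OF insert.hyps(1), of "\<lambda>j. A j \<inter> A b" lborel] fm fb
      by (auto simp: fmeasurable_def)
  qed
  have s1: "(\<Sum>i\<in>insert b S. measure lborel (A i)) = measure lborel (A b) + (\<Sum>i\<in>S. measure lborel (A i))"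
    using bS insert.hyps(1) by simp
  have s2: "(\<Sum>i\<in>insert b S. \<Sum>j\<in>{j\<in>insert b S. j < i}. measure lborel (A j \<inter> A i))
     = (\<Sum>j\<in>S. measure lborel (A j \<inter> A b)) + (\<Sum>i\<in>S. \<Sum>j\<in>{j\<in>S. j < i}. measure lborel (A j \<inter> A i))"
  proof -
    have e1: "{j\<in>insert b S. j < b} = S" using insert.hyps(2) by auto
    have e2: "\<And>i. i \<in> S \<Longrightarrow> {j\<in>insert b S. j < i} = {j\<in>S. j < i}" using insert.hyps(2) by auto
    let ?G = "\<lambda>i. \<Sum>j\<in>{j\<in>insert b S. j < i}. measure lborel (A j \<inter> A i)"
    have "(\<Sum>i\<in>insert b S. ?G i) = ?G b + (\<Sum>i\<in>S. ?G i)"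
      by (simp only: sum.insert[OF insert.hyps(1) bS])
    also have "?G b = (\<Sum>j\<in>S. measure lborel (A j \<inter> A b))" by (simp only: e1)
    also have "(\<Sum>i\<in>S. ?G i) = (\<Sum>i\<in>S. \<Sum>j\<in>{j\<in>S. j < i}. measure lborel (A j \<inter> A i))"
      by (rule sum.cong[OF refl]) (simp only: e2)
    finally show ?thesis .
  qed
  have "(\<Union>i\<in>insert b S. A i) = X \<union> A b" by (auto simp: X_def)
  then show ?case using un int s1 s2 IH by (simp add: X_def)
qed

lemma window:
  fixes f :: "nat \<Rightarrow> real"
  assumes ns: "\<not> summable f" and f0: "\<And>K. 0 \<le> f K" and s0: "0 < s"
  shows "\<exists>S. finite S \<and> S \<subseteq> {a0..} \<and> s \<le> sum f S \<and> (sum f S \<le> 2 * s \<or> card S = 1)"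
proof -
  have shift: "(\<Sum>k\<le>n. f (k + a0)) = sum f {a0..n + a0}" for n
    by (induction n) (auto simp: add.commute)
  have ex: "\<exists>b. s \<le> sum f {a0..b}"
  proof (rule ccontr)
    assume "\<not> (\<exists>b. s \<le> sum f {a0..b})"
    then have "\<And>b. sum f {a0..b} \<le> s" by (meson not_le less_imp_le)
    then have "summable (\<lambda>k. f (k + a0))"
      by (intro bounded_imp_summable[where B = s]) (auto simp: f0 shift)
    then have "summable f" by simp
    then show False using ns by simp
  qed
  define b0 where "b0 = (LEAST b. s \<le> sum f {a0..b})"
  have b0: "s \<le> sum f {a0..b0}" unfolding b0_def using ex by (rule LeastI_ex)
  have ab: "a0 \<le> b0"
  proof (rule ccontr)
    assume "\<not> a0 \<le> b0"
    then have "{a0..b0} = {}" by auto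
    then show False using b0 s0 by simp
  qed
  show ?thesis
  proof (cases "s \<le> f b0")
    case True
    then show ?thesis using ab by (intro exI[of _ "{b0}"]) auto
  next
    case False
    have neq: "b0 \<noteq> a0"
    proof
      assume "b0 = a0"
      then show False using b0 False by simp
    qed
    then have lt: "\<not> s \<le> sum f {a0..b0 - 1}"
      unfolding b0_def using ab by (intro not_less_Least) (auto simp: b0_def[symmetric])
    have split: "sum f {a0..b0} = sum f {a0..b0 - 1} + f b0"
    proof -
      have "{a0..b0} = insert b0 {a0..b0 - 1}" using ab neq by auto
      moreover have "b0 \<notin> {a0..b0 - 1}" using ab neq by auto
      ultimately show ?thesis by (simp add: add.commute)
    qed
    show ?thesis using b0 split lt False by (intro exI[of _ "{a0..b0}"]) auto
  qed
qed

lemma rr_lower: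
  assumes p: "0 < \<psi> (real K)" and K1: "1 \<le> K"
  shows "1 / (\<psi> (real K) + 1) - 1 / (real K)^2 \<le> rr \<psi> K"
proof -
  define lo where "lo = nat \<lfloor>\<psi> (real K)\<rfloor> + 1"
  define hi where "hi = K^2 - 1"
  have fl0: "0 \<le> \<lfloor>\<psi> (real K)\<rfloor>" using p by simp
  have lo_r: "real lo = of_int \<lfloor>\<psi> (real K)\<rfloor> + 1" unfolding lo_def using fl0 by simp
  have lo1: "real lo \<le> \<psi> (real K) + 1" using lo_r by linarith
  have lo2: "\<psi> (real K) < real lo" using lo_r by linarith
  have hi1: "real hi + 1 = (real K)^2"
  proof -
    have "1 \<le> K^2" using K1 by simp
    then have "hi + 1 = K^2" by (simp add: hi_def)
    then show ?thesis by (metis of_nat_1 of_nat_add of_nat_power)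
  qed
  show ?thesis
  proof (cases "lo \<le> hi")
    case True
    have lo0: "0 < real lo" using lo_r fl0 by linarith
    have "1 / (\<psi> (real K) + 1) \<le> 1 / real lo"
      using lo1 lo0 p by (intro divide_left_mono) auto
    then have "1 / (\<psi> (real K) + 1) - 1 / (real K)^2 \<le> 1 / real lo - 1 / (real hi + 1)"
      using hi1 by simp
    also have "\<dots> \<le> mu 1 (\<lambda>v. lo \<le> v!0 \<and> v!0 \<le> hi)"
      by (rule mu1_range) (use True in \<open>auto simp: lo_def\<close>)
    also have "\<dots> \<le> rr \<psi> K" unfolding rr_def
    proof (rule mu_mono)
      fix u assume "lo \<le> u!0 \<and> u!0 \<le> hi"
      then have a: "real lo \<le> real (u!0)" "real (u!0) + 1 \<le> real hi + 1" by auto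
      have c1: "\<psi> (real K) < real (u!0)" using a lo2 by linarith
      have c2: "real (u!0) < real K ^ 2" using a hi1 by linarith
      show "u!0 \<in> Rng \<psi> K" unfolding Rng_def using c1 c2 by blast
    qed
    finally show ?thesis .
  next
    case False
    then have "real hi + 1 \<le> real lo" by simp
    then have "(real K)^2 \<le> \<psi> (real K) + 1" using hi1 lo1 by linarith
    then have "1 / (\<psi> (real K) + 1) \<le> 1 / (real K)^2" using K1 p by (intro divide_left_mono) auto
    then show ?thesis using rr_nonneg[of \<psi> K] by linarith
  qed
qed

lemma rr_not_summable:
  assumes pos: "\<forall>x>0. \<psi> x > 0" and ns: "\<not> summable (\<lambda>k. 1 / \<psi> (real (Suc k)))"
  shows "\<not> summable (rr \<psi>)"
proof
  assume sr: "summable (rr \<psi>)"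
  have p: "\<And>k. 0 < \<psi> (real (Suc k))" using pos by simp
  have a: "\<not> summable (\<lambda>k. 1 / (\<psi> (real (Suc k)) + 1))"
  proof
    assume sg: "summable (\<lambda>k. 1 / (\<psi> (real (Suc k)) + 1))"
    then have "(\<lambda>k. 1 / (\<psi> (real (Suc k)) + 1)) \<longlonglongrightarrow> 0" by (rule summable_LIMSEQ_zero)
    then have ev: "eventually (\<lambda>k. 1 / (\<psi> (real (Suc k)) + 1) < 1/2) sequentially"
      by (rule order_tendstoD) simp
    have "summable (\<lambda>k. 1 / \<psi> (real (Suc k)))"
    proof (rule summable_comparison_test_ev)
      show "eventually (\<lambda>k. norm (1 / \<psi> (real (Suc k))) \<le> 2 * (1 / (\<psi> (real (Suc k)) + 1))) sequentially"
        using ev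
      proof (rule eventually_mono)
        fix k assume h: "1 / (\<psi> (real (Suc k)) + 1) < 1/2"
        have pk: "0 < \<psi> (real (Suc k))" by (rule p)
        then have "1 < \<psi> (real (Suc k))" using h by (simp add: field_simps)
        then show "norm (1 / \<psi> (real (Suc k))) \<le> 2 * (1 / (\<psi> (real (Suc k)) + 1))"
          using pk by (simp add: field_simps)
      qed
      show "summable (\<lambda>k. 2 * (1 / (\<psi> (real (Suc k)) + 1)))" using sg by (rule summable_mult)
    qed
    then show False using ns by simp
  qed
  have s1: "summable (\<lambda>k. rr \<psi> (Suc k))" using sr summable_iff_shift[of "rr \<psi>" 1] by simp
  have s2: "summable (\<lambda>k. inverse (real (Suc k) ^ 2))"
    using inverse_power_summable[of 2, where 'a=real] summable_iff_shift[of "\<lambda>n. inverse (real n ^ 2)" 1] by simp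
  have "summable (\<lambda>k. 1 / (\<psi> (real (Suc k)) + 1))"
  proof (rule summable_comparison_test'[where N = 0])
    show "summable (\<lambda>k. rr \<psi> (Suc k) + inverse (real (Suc k) ^ 2))" using s1 s2 by (rule summable_add)
    fix k :: nat
    have "1 / (\<psi> (real (Suc k)) + 1) - 1 / (real (Suc k))^2 \<le> rr \<psi> (Suc k)"
      by (rule rr_lower) (use p in auto)
    moreover have "0 \<le> 1 / (\<psi> (real (Suc k)) + 1)" using p[of k] by simp
    ultimately show "norm (1 / (\<psi> (real (Suc k)) + 1)) \<le> rr \<psi> (Suc k) + inverse (real (Suc k) ^ 2)"
      by (simp add: inverse_eq_divide)
  qed
  then show False using a by simp
qed



definition UU :: "(real \<Rightarrow> real) \<Rightarrow> nat \<Rightarrow> real set" where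
  "UU \<psi> m = (\<Union>K\<in>{m..}. cyl K (Dp \<psi> K))"

lemma UU_sets[measurable]: "UU \<psi> m \<in> sets lborel"
  unfolding UU_def by (intro sets.countable_UN') auto

lemma UU_sub: "UU \<psi> m \<subseteq> Om"
  unfolding UU_def cyl_def by auto

lemma ln_ge1: "64 \<le> K \<Longrightarrow> 1 \<le> ln (real K)"
proof -
  assume K64: "64 \<le> K"
  have "exp 1 \<le> (3::real)" using exp_le by simp
  also have "\<dots> \<le> real K" using K64 by simp
  finally show ?thesis using K64 by (simp add: ln_ge_iff)
qed

lemma cyl_lower:
  assumes ns: "\<not> summable (rr \<psi>)" and w: "w \<in> words n"
  shows "1/1048576 * nu w \<le> measure lborel (cyl n (\<lambda>u. u = w) \<inter> UU \<psi> m)"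
proof -
  define a0 where "a0 = m + n + sum_list w + 64"
  define s :: real where "s = 1/32768"
  obtain S where S: "finite S" "S \<subseteq> {a0..}" "s \<le> sum (rr \<psi>) S" "sum (rr \<psi>) S \<le> 2 * s \<or> card S = 1"
    using window[OF ns rr_nonneg, of s a0] by (auto simp: s_def)
  have KP: "n < K \<and> 64 \<le> K \<and> m \<le> K \<and> real (sum_list w) \<le> 128 * real K * ln (real K)" if K: "K \<in> S" for K
  proof -
    have Ka: "a0 \<le> K" using S(2) K by auto
    have l1: "1 \<le> ln (real K)" using Ka by (intro ln_ge1) (simp add: a0_def)
    have "real (sum_list w) \<le> real K" using Ka by (simp add: a0_def)
    also have "\<dots> \<le> 128 * real K * ln (real K)"
    proof -
      have "real K * 1 \<le> real K * (128 * ln (real K))" using l1 by (intro mult_left_mono) auto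
      then show ?thesis by (simp add: algebra_simps)
    qed
    finally show ?thesis using Ka by (simp add: a0_def)
  qed
  define A where "A K = cyl K (\<lambda>u. take n u = w \<and> Dp \<psi> K u)" for K
  define N where "N = nu w"
  define X where "X = sum (rr \<psi>) S"
  have N0: "0 \<le> N" using nu_nonneg[OF w] by (simp add: N_def)
  have X0: "0 \<le> X" unfolding X_def by (intro sum_nonneg rr_nonneg)
  have fmA: "A K \<in> fmeasurable lborel" for K unfolding A_def by (rule cyl_fmeas)
  have sub: "(\<Union>K\<in>S. A K) \<subseteq> cyl n (\<lambda>u. u = w) \<inter> UU \<psi> m"
  proof
    fix x assume "x \<in> (\<Union>K\<in>S. A K)"
    then obtain K where K: "K \<in> S" and x: "x \<in> A K" by auto
    have kp: "n < K" "m \<le> K" using KP[OF K] by auto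
    have xO: "x \<in> Om" and d: "take n (dig K x) = w" "Dp \<psi> K (dig K x)" using x by (auto simp: A_def cyl_def)
    have "dig n x = w" using d dig_take[of n K x] kp by simp
    then show "x \<in> cyl n (\<lambda>u. u = w) \<inter> UU \<psi> m"
      using xO d kp K unfolding UU_def cyl_def by auto
  qed
  have m1: "measure lborel (\<Union>K\<in>S. A K) \<le> measure lborel (cyl n (\<lambda>u. u = w) \<inter> UU \<psi> m)"
  proof (rule measure_mono_fmeasurable[OF sub])
    show "(\<Union>K\<in>S. A K) \<in> sets lborel" using S(1) fmA by (intro sets.finite_UN) (auto simp: fmeasurable_def)
    show "cyl n (\<lambda>u. u = w) \<inter> UU \<psi> m \<in> fmeasurable lborel"
      by (rule fmeasurableI2[OF cyl_fmeas[of n "\<lambda>u. u = w"]]) auto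
  qed
  have bon: "(\<Sum>i\<in>S. measure lborel (A i)) - (\<Sum>i\<in>S. \<Sum>j\<in>{j\<in>S. j < i}. measure lborel (A j \<inter> A i))
           \<le> measure lborel (\<Union>i\<in>S. A i)"
    by (rule bonf[OF S(1)]) (rule fmA)
  have lowA: "N * rr \<psi> K / 16 \<le> measure lborel (A K)" if K: "K \<in> S" for K
    using lower_bound[OF w, of K \<psi>] KP[OF K] by (simp add: A_def mu_def N_def)
  have pairA: "measure lborel (A j \<inter> A i) \<le> 256 * N * rr \<psi> j * rr \<psi> i"
    if ij: "i \<in> S" "j \<in> S" "j < i" for i j
  proof -
    have nj: "n < j" using KP[OF ij(2)] by simp
    have "A j \<inter> A i = cyl i (\<lambda>u. take n u = w \<and> Dp \<psi> j (take j u) \<and> Dp \<psi> i u)"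
      unfolding A_def cyl_def using dig_take[of j i] dig_take[of n j] ij(3) nj by auto
    then show ?thesis using pair_bound[OF w nj ij(3), of \<psi>] by (simp add: mu_def N_def)
  qed
  have s1: "N * X / 16 \<le> (\<Sum>i\<in>S. measure lborel (A i))"
  proof -
    have "N * X / 16 = (\<Sum>i\<in>S. N * rr \<psi> i / 16)"
      by (simp add: X_def sum_distrib_left sum_divide_distrib)
    also have "\<dots> \<le> (\<Sum>i\<in>S. measure lborel (A i))" by (intro sum_mono lowA)
    finally show ?thesis .
  qed
  have s2: "(\<Sum>i\<in>S. \<Sum>j\<in>{j\<in>S. j < i}. measure lborel (A j \<inter> A i)) \<le> 256 * N * (X * X)"
  proof -
    have "(\<Sum>i\<in>S. \<Sum>j\<in>{j\<in>S. j < i}. measure lborel (A j \<inter> A i))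
        \<le> (\<Sum>i\<in>S. \<Sum>j\<in>{j\<in>S. j < i}. 256 * N * rr \<psi> j * rr \<psi> i)"
      by (intro sum_mono pairA) auto
    also have "\<dots> \<le> (\<Sum>i\<in>S. \<Sum>j\<in>S. 256 * N * rr \<psi> j * rr \<psi> i)"
    proof (rule sum_mono)
      fix i assume "i \<in> S"
      show "(\<Sum>j\<in>{j\<in>S. j < i}. 256 * N * rr \<psi> j * rr \<psi> i) \<le> (\<Sum>j\<in>S. 256 * N * rr \<psi> j * rr \<psi> i)"
      proof (rule sum_mono2)
        show "finite S" by (rule S(1))
        show "{j\<in>S. j < i} \<subseteq> S" by auto
        fix j show "0 \<le> 256 * N * rr \<psi> j * rr \<psi> i" using N0 rr_nonneg[of \<psi> j] rr_nonneg[of \<psi> i] by simp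
      qed
    qed
    also have "\<dots> = 256 * N * (X * X)"
    proof -
      have "X * X = (\<Sum>i\<in>S. \<Sum>j\<in>S. rr \<psi> i * rr \<psi> j)" by (simp add: X_def sum_product)
      have "(\<Sum>i\<in>S. \<Sum>j\<in>S. 256 * N * rr \<psi> j * rr \<psi> i) = (\<Sum>i\<in>S. 256 * N * (\<Sum>j\<in>S. rr \<psi> i * rr \<psi> j))"
        by (intro sum.cong refl) (simp add: sum_distrib_left sum_distrib_right mult_ac)
      also have "\<dots> = 256 * N * (\<Sum>i\<in>S. \<Sum>j\<in>S. rr \<psi> i * rr \<psi> j)"
        by (simp add: sum_distrib_left)
      finally show ?thesis using \<open>X * X = _\<close> by simp
    qed
    finally show ?thesis .
  qed
  have main: "(N * X) / 16 - 256 * (N * (X * X)) \<le> measure lborel (cyl n (\<lambda>u. u = w) \<inter> UU \<psi> m)"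
    using s1 s2 bon m1 by (simp add: mult.assoc)
  show ?thesis
    using S(4)
  proof
    assume X2: "sum (rr \<psi>) S \<le> 2 * s"
    have "N * X * X \<le> N * X * (2 * s)"
      using X2 N0 X0 by (intro mult_left_mono) (auto simp: X_def)
    then have a1: "256 * (N * (X * X)) \<le> (N * X) / 64" by (simp add: s_def algebra_simps)
    have "s \<le> X" using S(3) by (simp add: X_def)
    then have a2: "N * s \<le> N * X" using N0 by (intro mult_left_mono) auto
    have a3: "N * s = N / 32768" by (simp add: s_def)
    have "N / 1048576 \<le> measure lborel (cyl n (\<lambda>u. u = w) \<inter> UU \<psi> m)"
      using a1 a2 a3 main N0 by linarith
    then show ?thesis unfolding N_def by simp
  next
    assume c: "card S = 1"
    then obtain K where SK: "S = {K}" by (auto simp: card_Suc_eq)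
    have e: "\<And>i. i \<in> S \<Longrightarrow> {j\<in>S. j < i} = {}" using SK by auto
    have "(\<Sum>i\<in>S. \<Sum>j\<in>{j\<in>S. j < i}. measure lborel (A j \<inter> A i)) = 0"
      by (rule sum.neutral) (simp add: e)
    then have "N * X / 16 \<le> measure lborel (cyl n (\<lambda>u. u = w) \<inter> UU \<psi> m)" using s1 bon m1 by linarith
    moreover have "s \<le> X" using S(3) by (simp add: X_def)
    then have "N * s \<le> N * X" using N0 by (intro mult_left_mono) auto
    ultimately show ?thesis using N0 unfolding N_def s_def by linarith
  qed
qed



lemma Om_sets_borel[measurable, simp]: "Om \<in> sets borel"
  using Om_sets by simp

lemma UU_sets_borel[measurable, simp]: "UU \<psi> m \<in> sets borel"
  using UU_sets by simp

lemma zero_one: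
  assumes H: "\<And>n w. w \<in> words n \<Longrightarrow> \<delta> * nu w \<le> measure lborel (cyl n (\<lambda>u. u = w) \<inter> UU \<psi> m)"
    and d0: "0 < \<delta>" and d1: "\<delta> \<le> 1"
  shows "measure lborel (Om - UU \<psi> m) = 0"
proof -
  define Pv where "Pv N u = (\<exists>K\<in>{m..N}. Dp \<psi> K (take K u))" for N u
  define V where "V N = cyl N (Pv N)" for N
  have VU: "V N \<subseteq> UU \<psi> m" for N
  proof
    fix x assume "x \<in> V N"
    then obtain K where x: "x \<in> Om" "K \<in> {m..N}" "Dp \<psi> K (take K (dig N x))"
      by (auto simp: V_def cyl_def Pv_def)
    then have "Dp \<psi> K (dig K x)" using dig_take[of K N x] by simp
    then show "x \<in> UU \<psi> m" using x unfolding UU_def cyl_def by auto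
  qed
  have OV: "Om - V N = cyl N (\<lambda>u. \<not> Pv N u)" for N by (auto simp: V_def cyl_def)
  have fin: "emeasure lborel (Om - X) = ennreal (measure lborel (Om - X))" if "X \<in> sets lborel" for X
  proof (rule emeasure_eq_ennreal_measure)
    have "emeasure lborel (Om - X) \<le> emeasure lborel Om" by (rule emeasure_mono) auto
    then show "emeasure lborel (Om - X) \<noteq> top" using emeasure_Om by (auto simp: top_unique)
  qed
  have key: "measure lborel (Om - UU \<psi> m) \<le> (1 - \<delta>) * measure lborel (Om - V N)" for N
  proof -
    define W where "W = {w \<in> words N. \<not> Pv N w}"
    have eqU: "Om - UU \<psi> m = (\<Union>w\<in>W. cyl N (\<lambda>u. u = w) - UU \<psi> m)"
    proof (intro equalityI subsetI)
      fix x assume x: "x \<in> Om - UU \<psi> m"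
      then have "x \<notin> V N" using VU by auto
      then have "\<not> Pv N (dig N x)" using x by (auto simp: V_def cyl_def)
      moreover have "dig N x \<in> words N" using x Om_dig_words by auto
      ultimately show "x \<in> (\<Union>w\<in>W. cyl N (\<lambda>u. u = w) - UU \<psi> m)"
        using x by (auto simp: W_def cyl_def)
    qed (auto simp: cyl_def)
    have "emeasure lborel (Om - UU \<psi> m) = (\<integral>\<^sup>+w. emeasure lborel (cyl N (\<lambda>u. u = w) - UU \<psi> m) \<partial>count_space W)"
      unfolding eqU
    proof (rule emeasure_UN_countable)
      show "disjoint_family_on (\<lambda>w. cyl N (\<lambda>u. u = w) - UU \<psi> m) W"
        unfolding disjoint_family_on_def cyl_def by auto
      show "countable W" by (rule countable_subset[OF subset_UNIV]) simp
    qed auto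
    also have "\<dots> \<le> (\<integral>\<^sup>+w. ennreal (1 - \<delta>) * ennreal (nu w) \<partial>count_space W)"
    proof (intro nn_integral_mono)
      fix w assume "w \<in> space (count_space W)"
      then have w: "w \<in> words N" by (simp add: W_def)
      have A: "cyl N (\<lambda>u. u = w) - UU \<psi> m = cyl N (\<lambda>u. u = w) - (cyl N (\<lambda>u. u = w) \<inter> UU \<psi> m)" by auto
      have "measure lborel (cyl N (\<lambda>u. u = w) - UU \<psi> m)
          = measure lborel (cyl N (\<lambda>u. u = w)) - measure lborel (cyl N (\<lambda>u. u = w) \<inter> UU \<psi> m)"
        unfolding A by (rule measure_Diff) (auto simp: emeasure_cyl_mu)
      also have "\<dots> \<le> nu w - \<delta> * nu w" using H[OF w] mu_single[OF w] by (simp add: mu_def)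
      finally have le: "measure lborel (cyl N (\<lambda>u. u = w) - UU \<psi> m) \<le> (1 - \<delta>) * nu w"
        by (simp add: algebra_simps)
      have "emeasure lborel (cyl N (\<lambda>u. u = w) - UU \<psi> m) = ennreal (measure lborel (cyl N (\<lambda>u. u = w) - UU \<psi> m))"
      proof (rule emeasure_eq_ennreal_measure)
        have "emeasure lborel (cyl N (\<lambda>u. u = w) - UU \<psi> m) \<le> emeasure lborel (cyl N (\<lambda>u. u = w))"
          by (rule emeasure_mono) auto
        then show "emeasure lborel (cyl N (\<lambda>u. u = w) - UU \<psi> m) \<noteq> top"
          by (auto simp: emeasure_cyl_mu top_unique)
      qed
      also have "\<dots> \<le> ennreal ((1 - \<delta>) * nu w)" using le by (rule ennreal_leI)
      also have "\<dots> = ennreal (1 - \<delta>) * ennreal (nu w)" using d1 by (simp add: ennreal_mult')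
      finally show "emeasure lborel (cyl N (\<lambda>u. u = w) - UU \<psi> m) \<le> ennreal (1 - \<delta>) * ennreal (nu w)" .
    qed
    also have "\<dots> = ennreal (1 - \<delta>) * emeasure lborel (cyl N (\<lambda>u. \<not> Pv N u))"
      unfolding emeasure_cyl W_def by (simp add: nn_integral_cmult)
    also have "\<dots> = ennreal ((1 - \<delta>) * measure lborel (Om - V N))"
      using d1 by (simp add: OV emeasure_cyl_mu mu_def ennreal_mult')
    finally have "ennreal (measure lborel (Om - UU \<psi> m)) \<le> ennreal ((1 - \<delta>) * measure lborel (Om - V N))"
      using fin[of "UU \<psi> m"] by simp
    then show ?thesis using d1 by (subst (asm) ennreal_le_iff) auto
  qed
  have mono: "V N \<subseteq> V N'" if "N \<le> N'" for N N'
  proof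
    fix x assume "x \<in> V N"
    then obtain K where x: "x \<in> Om" "K \<in> {m..N}" "Dp \<psi> K (take K (dig N x))"
      by (auto simp: V_def cyl_def Pv_def)
    have "take K (dig N x) = dig K x" using dig_take[of K N x] x(2) by simp
    moreover have "take K (dig N' x) = dig K x" using dig_take[of K N' x] x(2) that by simp
    ultimately show "x \<in> V N'" using x that by (auto simp: V_def cyl_def Pv_def intro!: bexI[of _ K])
  qed
  have UV: "UU \<psi> m = (\<Union>N. V N)"
  proof (intro equalityI subsetI)
    fix x assume "x \<in> UU \<psi> m"
    then obtain K where K: "m \<le> K" "x \<in> cyl K (Dp \<psi> K)" by (auto simp: UU_def)
    then have "x \<in> V K" by (auto simp: V_def cyl_def Pv_def intro!: bexI[of _ K])
    then show "x \<in> (\<Union>N. V N)" by auto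
  qed (use VU in auto)
  have lim: "(\<lambda>N. measure lborel (Om - V N)) \<longlonglongrightarrow> measure lborel (\<Inter>N. Om - V N)"
  proof (rule Lim_measure_decseq)
    show "range (\<lambda>N. Om - V N) \<subseteq> sets lborel" by (auto simp: V_def)
    show "decseq (\<lambda>N. Om - V N)" unfolding decseq_def using mono by auto
    fix N show "emeasure lborel (Om - V N) \<noteq> \<infinity>" using fin[of "V N"] by (simp add: V_def)
  qed
  have "(\<Inter>N. Om - V N) = Om - UU \<psi> m" using UV by auto
  then have lim2: "(\<lambda>N. (1 - \<delta>) * measure lborel (Om - V N)) \<longlonglongrightarrow> (1 - \<delta>) * measure lborel (Om - UU \<psi> m)"
    using lim by (intro tendsto_mult_left) simp
  have "measure lborel (Om - UU \<psi> m) \<le> (1 - \<delta>) * measure lborel (Om - UU \<psi> m)"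
    using lim2 key by (intro LIMSEQ_le_const) auto
  then have "\<delta> * measure lborel (Om - UU \<psi> m) \<le> 0" by (simp add: algebra_simps)
  then have "measure lborel (Om - UU \<psi> m) \<le> 0" using d0 by (simp add: mult_le_0_iff)
  then show ?thesis using measure_nonneg[of lborel "Om - UU \<psi> m"] by linarith
qed



lemma cf_quot_frac: "1 \<le> l \<Longrightarrow> cf_quot \<alpha> l = cf_quot (frac \<alpha>) l"
  by (simp add: cf_quot_def)

lemma dig_nth: "l < K \<Longrightarrow> dig K x ! l = nat (cf_quot x (Suc l))"
  by (simp add: dig_def nth_upt del: upt_Suc)

lemma good_point:
  assumes x: "x \<in> Om" and K1: "1 \<le> K" and D: "Dp \<psi> K (dig K x)"
    and fx: "frac \<alpha> = x"
  shows "\<psi> (real K) < real_of_int (cf_quot \<alpha> K) \<and> real_of_int (cf_quot \<alpha> K) < (real K)^2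
         \<and> (\<Sum>l=1..K-1. real_of_int (cf_quot \<alpha> l)) \<le> 256 * real K * ln (real K)"
proof -
  have pd: "pos (dig K x)" using Om_decomp[OF x, of K] by simp
  have cfpos: "0 < cf_quot x l" if l: "1 \<le> l" "l \<le> K" for l
  proof -
    have "dig K x ! (l - 1) = nat (cf_quot x l)" using dig_nth[of "l-1" K x] l by simp
    moreover have "0 < dig K x ! (l - 1)" using pd l by (auto simp: pos_def)
    ultimately show ?thesis by simp
  qed
  have cfa: "cf_quot \<alpha> l = cf_quot x l" if "1 \<le> l" for l using cf_quot_frac[OF that, of \<alpha>] fx by simp
  have rl: "real_of_int (cf_quot \<alpha> l) = real (nat (cf_quot x l))" if "1 \<le> l" "l \<le> K" for l
    using cfpos[OF that] cfa[OF that(1)] by simp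
  have last: "dig K x ! (K-1) = nat (cf_quot x K)" using dig_nth[of "K-1" K x] K1 by simp
  have R: "nat (cf_quot x K) \<in> Rng \<psi> K" using D last by (simp add: Dp_def)
  have s: "sum_list (take (K-1) (dig K x)) = (\<Sum>l=1..K-1. nat (cf_quot x l))"
  proof -
    have "take (K-1) (dig K x) = dig (K-1) x" using dig_take[of "K-1" K x] by simp
    also have "sum_list (dig (K-1) x) = (\<Sum>l\<in>set [1..<Suc (K-1)]. nat (cf_quot x l))"
      unfolding dig_def by (rule interv_sum_list_conv_sum_set_nat)
    also have "set [1..<Suc (K-1)] = {1..K-1}" by auto
    finally show ?thesis .
  qed
  have "(\<Sum>l=1..K-1. real_of_int (cf_quot \<alpha> l)) = (\<Sum>l=1..K-1. real (nat (cf_quot x l)))"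
    by (intro sum.cong refl rl) auto
  also have "\<dots> = real (\<Sum>l=1..K-1. nat (cf_quot x l))" by simp
  also have "\<dots> = real (sum_list (take (K-1) (dig K x)))" by (simp only: s)
  also have "\<dots> \<le> 256 * real K * ln (real K)" using D by (simp add: Dp_def)
  finally have S: "(\<Sum>l=1..K-1. real_of_int (cf_quot \<alpha> l)) \<le> 256 * real K * ln (real K)" .
  have "real_of_int (cf_quot \<alpha> K) = real (nat (cf_quot x K))" using rl[of K] K1 by simp
  then show ?thesis using R S by (simp add: Rng_def)
qed

theorem corollary1:
  shows "\<exists>C>0. \<forall>\<psi> :: real \<Rightarrow> real.
           (\<forall>x>0. \<psi> x > 0) \<and> mono_on {0<..} \<psi> \<and>
           \<not> summable (\<lambda>k. 1 / \<psi> (real (Suc k)))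
           \<longrightarrow> (AE \<alpha> in lborel.
                 \<exists>\<^sub>\<infinity>K. \<psi> (real K) < real_of_int (cf_quot \<alpha> K)
                      \<and> real_of_int (cf_quot \<alpha> K) < (real K)^2
                      \<and> (\<Sum>l=1..K-1. real_of_int (cf_quot \<alpha> l)) \<le> C * real K * ln (real K))"
proof (intro exI[of _ 256] conjI allI impI)
  show "(0::real) < 256" by simp
  fix \<psi> :: "real \<Rightarrow> real"
  assume hyp: "(\<forall>x>0. \<psi> x > 0) \<and> mono_on {0<..} \<psi> \<and> \<not> summable (\<lambda>k. 1 / \<psi> (real (Suc k)))"
  then have pos: "\<forall>x>0. \<psi> x > 0" and ns: "\<not> summable (\<lambda>k. 1 / \<psi> (real (Suc k)))" by auto
  have nsr: "\<not> summable (rr \<psi>)" by (rule rr_not_summable[OF pos ns])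
  have z: "measure lborel (Om - UU \<psi> m) = 0" for m
    by (rule zero_one[where \<delta> = "1/1048576"]) (use cyl_lower[OF nsr] in auto)
  have nullm: "Om - UU \<psi> m \<in> null_sets lborel" for m
  proof -
    have fin: "emeasure lborel (Om - UU \<psi> m) \<noteq> top"
    proof -
      have "emeasure lborel (Om - UU \<psi> m) \<le> emeasure lborel Om" by (rule emeasure_mono) auto
      then show ?thesis using emeasure_Om by (auto simp: top_unique)
    qed
    have "emeasure lborel (Om - UU \<psi> m) = 0"
      using emeasure_eq_ennreal_measure[OF fin] z[of m] by simp
    then show ?thesis by (auto simp: null_sets_def)
  qed
  define N0 where "N0 = \<rat> \<union> (\<Union>m. Om - UU \<psi> m)"
  have N0: "N0 \<in> null_sets lborel"
  proof -
    have "(\<Union>m. Om - UU \<psi> m) \<in> null_sets lborel" by (rule null_sets_UN) (rule nullm)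
    then show ?thesis unfolding N0_def
      using countable_imp_null_set_lborel[OF countable_rat] by (rule null_sets.Un[rotated])
  qed
  define G where "G \<alpha> = (\<exists>\<^sub>\<infinity>K. \<psi> (real K) < real_of_int (cf_quot \<alpha> K)
                      \<and> real_of_int (cf_quot \<alpha> K) < (real K)^2
                      \<and> (\<Sum>l=1..K-1. real_of_int (cf_quot \<alpha> l)) \<le> 256 * real K * ln (real K))" for \<alpha>
  have good: "G \<alpha>" if nf: "frac \<alpha> \<notin> N0" for \<alpha>
  proof -
    define x where "x = frac \<alpha>"
    have xr: "x \<notin> \<rat>" using nf by (simp add: N0_def x_def)
    have "x \<noteq> 0" using xr by auto
    then have xO: "x \<in> Om" using xr frac_ge_0[of \<alpha>] frac_lt_1[of \<alpha>] by (auto simp: Om_def x_def)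
    have xU: "x \<in> UU \<psi> m" for m using nf xO by (auto simp: N0_def x_def)
    show ?thesis unfolding G_def INFM_nat_le
    proof
      fix m
      obtain K where K: "Suc m \<le> K" "x \<in> cyl K (Dp \<psi> K)" using xU[of "Suc m"] by (auto simp: UU_def)
      have "\<psi> (real K) < real_of_int (cf_quot \<alpha> K) \<and> real_of_int (cf_quot \<alpha> K) < (real K)^2
            \<and> (\<Sum>l=1..K-1. real_of_int (cf_quot \<alpha> l)) \<le> 256 * real K * ln (real K)"
        by (rule good_point[OF xO]) (use K in \<open>auto simp: cyl_def x_def\<close>)
      then show "\<exists>n\<ge>m. \<psi> (real n) < real_of_int (cf_quot \<alpha> n) \<and> real_of_int (cf_quot \<alpha> n) < (real n)^2
            \<and> (\<Sum>l=1..n-1. real_of_int (cf_quot \<alpha> l)) \<le> 256 * real n * ln (real n)"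
        using K(1) by (intro exI[of _ K]) auto
    qed
  qed
  have "AE \<alpha> in lborel. G \<alpha>"
  proof (rule AE_I')
    show "(\<Union>z\<in>(UNIV::int set). {x. x - of_int z \<in> N0}) \<in> null_sets lborel"
      by (rule null_sets_UN') (auto intro: null_sets_translation[OF N0])
    show "{x \<in> space lborel. \<not> G x} \<subseteq> (\<Union>z\<in>(UNIV::int set). {x. x - of_int z \<in> N0})"
    proof
      fix \<alpha> assume "\<alpha> \<in> {x \<in> space lborel. \<not> G x}"
      then have "frac \<alpha> \<in> N0" using good by auto
      then have "\<alpha> - of_int \<lfloor>\<alpha>\<rfloor> \<in> N0" by (simp add: frac_def)
      then show "\<alpha> \<in> (\<Union>z\<in>(UNIV::int set). {x. x - of_int z \<in> N0})" by auto
    qed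
  qed
  then show "AE \<alpha> in lborel.
                 \<exists>\<^sub>\<infinity>K. \<psi> (real K) < real_of_int (cf_quot \<alpha> K)
                      \<and> real_of_int (cf_quot \<alpha> K) < (real K)^2
                      \<and> (\<Sum>l=1..K-1. real_of_int (cf_quot \<alpha> l)) \<le> 256 * real K * ln (real K)"
    by (simp add: G_def)
qed


end
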